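(* Assume Setting (S) and $\gamma>4\alpha$. Then for every $\varepsilon\in\big(0,\frac{\gamma^2-16\alpha^2}{\gamma^2+16\alpha^2}\big)$ and every $T>\frac{2\pi}{\sqrt{\gamma^2(1-\varepsilon)-16\alpha^2(1+\varepsilon)}}$ there exist $n_0=n_0(\varepsilon)\in\mathbb{N}$, independent of $T$ and of the coefficients $C_n,D_n,R_n$, and a constant $c(T,\varepsilon)>0$ such that $$\int_0^\infty k(t)\big(|u_1^{n_0}(t)|^2+|u_2^{n_0}(t)|^2\big)dt\ \ge\ c(T,\varepsilon)\sum_{n=n_0}^\infty(1+e^{-2\operatorname{Im}\omega_nT})\big(|C_n|^2+|d_nD_n|^2\big).$$
   Context: Setting (S): $(\omega_n),(\zeta_n),(C_n),(D_n),(c_n),(d_n)$ ($n\ge1$) are complex sequences and $(r_n),(R_n)$ are real sequences. There are constants $\gamma>0$, $\alpha>0$, $\chi<0$, $n'\in\mathbb{N}$, $\mu>0$, $\nu>1/2$, $M>0$, $0<c_1\le c_2$ such that: (H1) $\liminf_{n\to\infty}(\operatorname{Re}\omega_{n+1}-\operatorname{Re}\omega_n)=\liminf_{n\to\infty}(\operatorname{Re}\zeta_{n+1}-\operatorname{Re}\zeta_n)=\gamma$; (H2) $\operatorname{Im}\omega_n\to\alpha$, $r_n\to\chi$, $\operatorname{Im}\zeta_n\to0$; (H3) $\omega_n\ne0$, $\zeta_n\neq0$, $c_1|\zeta_n|\le|d_n|\le c_2|\zeta_n|$ and $|c_n|\le M/|\omega_n|$ for all $n$; (H4) $|R_n|\le\mu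 n^{-\nu}(|C_n|^2+|d_nD_n|^2)^{1/2}$ for $n\ge n'$ and $|R_n|\le\mu(|C_n|^2+|d_nD_n|^2)^{1/2}$ for $n\le n'$; (H5) $\sum_n(|C_n|^2+|d_nD_n|^2)<\infty$. For $n_0\in\mathbb{N}$ and $t\in\mathbb{R}$, $u_1^{n_0}(t)=\sum_{n\ge n_0}\big(C_ne^{i\omega_nt}+\overline{C_n}e^{-i\overline{\omega_n}t}+R_ne^{r_nt}+D_ne^{i\zeta_nt}+\overline{D_n}e^{-i\overline{\zeta_n}t}\big)$, $u_2^{n_0}(t)=\sum_{n\ge n_0}\big(d_nD_ne^{i\zeta_nt}+\overline{d_nD_n}e^{-i\overline{\zeta_n}t}+c_nC_ne^{i\omega_nt}+\overline{c_nC_n}e^{-i\overline{\omega_n}t}\big)$. For $T>0$, $k(t):=\sin(\pi t/T)$ for $t\in[0,T]$ and $k(t):=0$ otherwise. *)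

theory Defs
  imports "HOL-Analysis.Analysis"
begin

definition kfun :: "real \<Rightarrow> real \<Rightarrow> real" where
  "kfun T t = (if 0 \<le> t \<and> t \<le> T then sin (pi * t / T) else 0)"

definition u1_part ::
  "(nat \<Rightarrow> complex) \<Rightarrow> (nat \<Rightarrow> complex) \<Rightarrow> (nat \<Rightarrow> real) \<Rightarrow>
   (nat \<Rightarrow> complex) \<Rightarrow> (nat \<Rightarrow> complex) \<Rightarrow> (nat \<Rightarrow> real) \<Rightarrow>
   nat \<Rightarrow> nat \<Rightarrow> real \<Rightarrow> complex" where
  "u1_part \<omega> \<zeta> r C D R n0 N t =
     (\<Sum>n\<in>{n0..<N}. C n * exp (\<i> * \<omega> n * of_real t)
        + cnj (C n) * exp (- \<i> * cnj (\<omega> n) * of_real t)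
        + of_real (R n * exp (r n * t))
        + D n * exp (\<i> * \<zeta> n * of_real t)
        + cnj (D n) * exp (- \<i> * cnj (\<zeta> n) * of_real t))"

definition u2_part ::
  "(nat \<Rightarrow> complex) \<Rightarrow> (nat \<Rightarrow> complex) \<Rightarrow> (nat \<Rightarrow> complex) \<Rightarrow> (nat \<Rightarrow> complex) \<Rightarrow>
   (nat \<Rightarrow> complex) \<Rightarrow> (nat \<Rightarrow> complex) \<Rightarrow>
   nat \<Rightarrow> nat \<Rightarrow> real \<Rightarrow> complex" where
  "u2_part \<omega> \<zeta> c d C D n0 N t =
     (\<Sum>n\<in>{n0..<N}. d n * D n * exp (\<i> * \<zeta> n * of_real t)
        + cnj (d n * D n) * exp (- \<i> * cnj (\<zeta> n) * of_real t)
        + c n * C n * exp (\<i> * \<omega> n * of_real t)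
        + cnj (c n * C n) * exp (- \<i> * cnj (\<omega> n) * of_real t))"

end

theory Submission
  imports Defs "HOL-Analysis.Analysis"
begin

definition Kc :: "real \<Rightarrow> complex \<Rightarrow> complex" where
  "Kc T \<mu> = of_real (pi/T)  *  (1 + exp (\<i>  *  \<mu>  *  of_real T)) / (of_real ((pi/T)^2) - \<mu>^2)"

lemma Kc_integral:
  assumes T: "T > 0" and ne: "of_real ((pi/T)^2) \<noteq> \<mu>^2"
  shows "((\<lambda>t. of_real (sin (pi * t/T))  *  exp (\<i>  *  \<mu>  *  of_real t)) has_integral Kc T \<mu>) {0..T}"
proof -
  define b where "b = pi / T"
  define c where "c = inverse (of_real (b^2) - \<mu>^2)"
  define G where "G = (\<lambda>z::complex. c * (exp (\<i> * \<mu> * z) * (\<i> * \<mu> * sin (of_real b * z) - of_real b * cos (of_real b * z))))"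
  have nz: "of_real (b^2) - \<mu>^2 \<noteq> 0" using ne by (simp add: b_def)
  have c1: "c * (of_real (b^2) - \<mu>^2) = 1" using nz by (simp add: c_def)
  have d: "(G has_field_derivative exp (\<i> * \<mu> * z) * sin (of_real b * z)) (at z)" for z
  proof -
    have e: "c * (exp (\<i> * \<mu> * z) * sin (of_real b * z) * (of_real (b^2) - \<mu>^2)) = exp (\<i> * \<mu> * z) * sin (of_real b * z)"
    proof -
      have "c * (exp (\<i> * \<mu> * z) * sin (of_real b * z) * (of_real (b^2) - \<mu>^2)) = exp (\<i> * \<mu> * z) * sin (of_real b * z) * (c * (of_real (b^2) - \<mu>^2))"
        by (simp only: mult_ac)
      then show ?thesis using c1 by simp
    qed
    show ?thesis
      unfolding G_def
      apply (rule derivative_eq_intros refl)+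
      apply (subst e[symmetric])
      apply (simp add: algebra_simps power2_eq_square)
      done
  qed
  have "((\<lambda>t. exp (\<i> * \<mu> * of_real t)  *  sin (of_real b  *  of_real t)) has_integral (G (of_real T) - G (of_real 0))) {0..T}"
    apply (rule fundamental_theorem_of_calculus)
    using T apply simp
    apply (rule has_vector_derivative_real_field[where f=G]) using d by simp
  moreover have "G (of_real T) - G (of_real 0) = Kc T \<mu>"
  proof -
    have bT: "of_real b * of_real T = (of_real pi :: complex)" proof -
      have "b * T = pi" using T by (simp add: b_def)
      then show ?thesis by (metis of_real_mult)
    qed
    have s1: "sin (of_real b * of_real T :: complex) = 0" unfolding bT by (simp add: sin_of_real)
    have s2: "cos (of_real b * of_real T :: complex) = -1" unfolding bT by (simp add: cos_of_real)
    show ?thesis unfolding G_def Kc_def using s1 s2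
      by (simp add: c_def b_def divide_inverse algebra_simps)
  qed
  moreover have "exp (\<i> * \<mu> * of_real t)  *  sin (of_real b  *  of_real t) = of_real (sin (pi * t/T))  *  exp (\<i>  *  \<mu>  *  of_real t)" for t
    by (simp add: b_def sin_of_real[symmetric] mult.commute)
  ultimately show ?thesis by simp
qed

definition Kr :: "real \<Rightarrow> real \<Rightarrow> real" where
  "Kr T y = (pi/T) * (1 + exp (-2*y*T)) / ((pi/T)^2 + 4*y^2)"

lemma Kr_pos: "T > 0 \<Longrightarrow> Kr T y > 0"
  unfolding Kr_def by (intro divide_pos_pos mult_pos_pos) (auto intro: add_pos_nonneg)

lemma Kc_diag: assumes "T > 0" shows "Kc T (of_real (2*y) * \<i>) = of_real (Kr T y)"
proof -
  have "exp (\<i> * (of_real (2*y) * \<i>) * of_real T) = of_real (exp (-2*y*T))"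
    by (simp add: exp_of_real[symmetric] algebra_simps)
  moreover have "(of_real (2*y) * \<i>)^2 = (of_real (-4*y^2) :: complex)"
    by (simp add: power2_eq_square algebra_simps)
  ultimately show ?thesis unfolding Kc_def Kr_def by simp
qed

lemma Kc_bound:
  assumes T: "T > 0" and pos: "(Re \<mu>)^2 - (Im \<mu>)^2 - (pi/T)^2 > 0"
  shows "cmod (Kc T \<mu>) \<le> (pi/T) * (1 + exp (- Im \<mu> * T)) / ((Re \<mu>)^2 - (Im \<mu>)^2 - (pi/T)^2)"
proof -
  have n1: "cmod (1 + exp (\<i> * \<mu> * of_real T)) \<le> 1 + exp (- Im \<mu> * T)"
    using norm_triangle_ineq[of 1 "exp (\<i> * \<mu> * of_real T)"] by simp
  have "Re (of_real ((pi/T)^2) - \<mu>^2) = (pi/T)^2 - ((Re \<mu>)^2 - (Im \<mu>)^2)"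
    by (simp add: power2_eq_square)
  hence n2: "(Re \<mu>)^2 - (Im \<mu>)^2 - (pi/T)^2 \<le> cmod (of_real ((pi/T)^2) - \<mu>^2)"
    using abs_Re_le_cmod[of "of_real ((pi/T)^2) - \<mu>^2"] by linarith
  have "cmod (Kc T \<mu>) = (pi/T) * cmod (1 + exp (\<i> * \<mu> * of_real T)) / cmod (of_real ((pi/T)^2) - \<mu>^2)"
    unfolding Kc_def using T by (simp add: norm_divide norm_mult)
  also have "\<dots> \<le> (pi/T) * (1 + exp (- Im \<mu> * T)) / ((Re \<mu>)^2 - (Im \<mu>)^2 - (pi/T)^2)"
    apply (rule frac_le)
    subgoal using T by (intro mult_nonneg_nonneg add_nonneg_nonneg) auto
    subgoal using T n1 by (intro mult_left_mono) auto
    subgoal using pos by simp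
    subgoal using n2 by simp
    done
  finally show ?thesis .
qed

lemma sum_4k2_closed: "(\<Sum>k\<in>{-int m..int m} - {0}. 1 / (4 * (of_int k)^2 - 1 :: real)) = 2 * real m / (2 * real m + 1)"
proof (induction m)
  case 0
  then show ?case by simp
next
  case (Suc m)
  have e: "{-int (Suc m)..int (Suc m)} - {0} = insert (int (Suc m)) (insert (- int (Suc m)) ({-int m..int m} - {0}))"
    by auto
  have "(\<Sum>k\<in>{-int (Suc m)..int (Suc m)} - {0}. 1 / (4 * (of_int k)^2 - 1 :: real))
      = 2 / (4 * (real (Suc m))^2 - 1) + 2 * real m / (2 * real m + 1)"
  proof -
    have sq: "(of_int (- int (Suc m)) :: real)^2 = (real (Suc m))^2" by (simp add: power2_eq_square algebra_simps)
    show ?thesis unfolding e using sq by (simp add: Suc.IH)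
  qed
  also have "\<dots> = 2 * real (Suc m) / (2 * real (Suc m) + 1)"
  proof -
    have f: "4 * (real (Suc m))^2 - 1 = (2*real m+1)*(2*real m+3)" by (simp add: power2_eq_square algebra_simps)
    have p1: "(2 * real m + 1) > 0" "(2 * real m + 3) > 0" by auto
    have g: "2*real (Suc m)/(2*real (Suc m)+1) = 2*(real m+1)/(2*real m+3)" by (simp add: algebra_simps)
    have main: "2 / ((2 * real m + 1) * (2 * real m + 3)) + 2 * real m / (2 * real m + 1) = 2 * (real m + 1) / (2 * real m + 3)"
      using p1 by (simp add: divide_simps) (simp add: algebra_simps)
    show ?thesis by (simp only: f g main)
  qed
  finally show ?case by simp
qed

lemma sum_4k2_le:
  assumes "finite K" "0 \<notin> K"
  shows "(\<Sum>k\<in>K. 1 / (4 * (of_int k)^2 - 1 :: real)) \<le> 1"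
proof -
  obtain m :: nat where m: "K \<subseteq> {-int m..int m}"
  proof -
    have "bounded (of_int ` K :: real set)" using assms(1) by (simp add: finite_imp_bounded)
    then obtain B where B: "\<forall>x\<in>K. \<bar>real_of_int x\<bar> \<le> B" unfolding bounded_iff by auto
    show ?thesis
      apply (rule that[of "nat \<lceil>B\<rceil>"])
    proof
      fix x assume "x \<in> K"
      hence "real_of_int \<bar>x\<bar> \<le> B" using B by simp
      hence "\<lceil>real_of_int \<bar>x\<bar>\<rceil> \<le> \<lceil>B\<rceil>" by (rule ceiling_mono)
      hence "\<bar>x\<bar> \<le> int (nat \<lceil>B\<rceil>)" by linarith
      thus "x \<in> {-int (nat \<lceil>B\<rceil>)..int (nat \<lceil>B\<rceil>)}" by auto
    qed
  qed
  have "(\<Sum>k\<in>K. 1 / (4 * (of_int k)^2 - 1 :: real)) \<le> (\<Sum>k\<in>{-int m..int m} - {0}. 1 / (4 * (of_int k)^2 - 1 :: real))"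
  proof (rule sum_mono2)
    show "K \<subseteq> {-int m..int m} - {0}" using m assms by auto
    show "0 \<le> 1 / (4 * (of_int k)^2 - 1 :: real)" if "k \<in> {-int m..int m} - {0} - K" for k
    proof -
      have "k \<noteq> 0" using that by auto
      hence "1 \<le> \<bar>k\<bar>" by linarith
      hence "(1::real) \<le> of_int \<bar>k\<bar>" by linarith
      hence "1 \<le> (of_int k :: real)^2" using one_le_power[of "\<bar>of_int k::real\<bar>" 2] by simp
      then show ?thesis by simp
    qed
  qed simp
  also have "\<dots> \<le> 1" unfolding sum_4k2_closed by simp
  finally show ?thesis .
qed

lemma expand_sq:
  fixes a lam :: "'i \<Rightarrow> complex"
  shows "(cmod (\<Sum>i\<in>I. a i * exp (\<i> * lam i * of_real t)))^2
       = Re (\<Sum>i\<in>I. \<Sum>j\<in>I. a i * cnj (a j) * exp (\<i> * (lam i - cnj (lam j)) * of_real t))"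
proof -
  let ?z = "\<Sum>i\<in>I. a i * exp (\<i> * lam i * of_real t)"
  have "(cmod ?z)^2 = Re (?z * cnj ?z)"
    by (metis Re_complex_of_real complex_norm_square)
  also have "?z * cnj ?z = (\<Sum>i\<in>I. \<Sum>j\<in>I. a i * exp (\<i> * lam i * of_real t) * (cnj (a j) * exp (- \<i> * cnj (lam j) * of_real t)))"
    by (simp add: sum_product cnj_sum exp_cnj)
  also have "\<dots> = (\<Sum>i\<in>I. \<Sum>j\<in>I. a i * cnj (a j) * exp (\<i> * (lam i - cnj (lam j)) * of_real t))"
    by (intro sum.cong refl) (simp add: exp_diff algebra_simps exp_minus divide_inverse right_diff_distrib)
  finally show ?thesis .
qed

lemma gram_integral:
  fixes a lam :: "'i \<Rightarrow> complex"
  assumes I: "finite I" and T: "T > 0"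
    and ne: "\<And>i j. i \<in> I \<Longrightarrow> j \<in> I \<Longrightarrow> of_real ((pi/T)^2) \<noteq> (lam i - cnj (lam j))^2"
  shows "((\<lambda>t. sin (pi*t/T) * (cmod (\<Sum>i\<in>I. a i * exp (\<i> * lam i * of_real t)))^2) has_integral
          Re (\<Sum>i\<in>I. \<Sum>j\<in>I. a i * cnj (a j) * Kc T (lam i - cnj (lam j)))) {0..T}"
proof -
  have h: "((\<lambda>t. \<Sum>i\<in>I. \<Sum>j\<in>I. a i * cnj (a j) * (of_real (sin (pi*t/T)) * exp (\<i> * (lam i - cnj (lam j)) * of_real t))) has_integral
          (\<Sum>i\<in>I. \<Sum>j\<in>I. a i * cnj (a j) * Kc T (lam i - cnj (lam j)))) {0..T}"
    apply (intro has_integral_sum I ballI has_integral_mult_right)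
    apply (rule Kc_integral[OF T]) using ne by auto
  have "((Re \<circ> (\<lambda>t. \<Sum>i\<in>I. \<Sum>j\<in>I. a i * cnj (a j) * (of_real (sin (pi*t/T)) * exp (\<i> * (lam i - cnj (lam j)) * of_real t)))) has_integral
          Re (\<Sum>i\<in>I. \<Sum>j\<in>I. a i * cnj (a j) * Kc T (lam i - cnj (lam j)))) {0..T}"
    by (rule has_integral_linear[OF h bounded_linear_Re])
  moreover have "(Re \<circ> (\<lambda>t. \<Sum>i\<in>I. \<Sum>j\<in>I. a i * cnj (a j) * (of_real (sin (pi*t/T)) * exp (\<i> * (lam i - cnj (lam j)) * of_real t))))
      = (\<lambda>t. sin (pi*t/T) * (cmod (\<Sum>i\<in>I. a i * exp (\<i> * lam i * of_real t)))^2)"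
  proof
    fix t
    have "(\<Sum>i\<in>I. \<Sum>j\<in>I. a i * cnj (a j) * (of_real (sin (pi*t/T)) * exp (\<i> * (lam i - cnj (lam j)) * of_real t)))
        = of_real (sin (pi*t/T)) * (\<Sum>i\<in>I. \<Sum>j\<in>I. a i * cnj (a j) * exp (\<i> * (lam i - cnj (lam j)) * of_real t))"
      by (simp add: sum_distrib_left algebra_simps)
    then show "(Re \<circ> (\<lambda>t. \<Sum>i\<in>I. \<Sum>j\<in>I. a i * cnj (a j) * (of_real (sin (pi*t/T)) * exp (\<i> * (lam i - cnj (lam j)) * of_real t)))) t
      = sin (pi*t/T) * (cmod (\<Sum>i\<in>I. a i * exp (\<i> * lam i * of_real t)))^2"
      by (simp add: expand_sq)
  qed
  ultimately show ?thesis by simp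
qed

lemma exp_sqrt_ineq:
  "1 + exp (-(yi+yj) * T) \<le> sqrt (1 + exp (-2 * yi * T)) * sqrt (1 + exp (-2 * yj * T))"
proof -
  define u where "u = exp (-yi * T)"
  define v where "v = exp (-yj * T)"
  have e1: "exp (-(yi+yj) * T) = u * v" by (simp add: u_def v_def exp_add[symmetric] algebra_simps)
  have e2: "exp (-2 * yi * T) = u^2" by (simp add: u_def exp_add[symmetric] power2_eq_square algebra_simps flip: exp_add)
  have e3: "exp (-2 * yj * T) = v^2" by (simp add: v_def power2_eq_square algebra_simps flip: exp_add)
  have "(1 + u * v)^2 \<le> (1 + u^2) * (1 + v^2)"
  proof -
    have "0 \<le> (u - v)^2" by simp
    thus ?thesis by (simp add: power2_eq_square algebra_simps)
  qed
  hence "1 + u * v \<le> sqrt ((1 + u^2) * (1 + v^2))" by (rule real_le_rsqrt)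
  thus ?thesis unfolding e1 e2 e3 by (simp add: real_sqrt_mult)
qed

lemma amgm2: "(p::real) * q \<le> (p^2 + q^2) / 2"
proof -
  have "0 \<le> (p - q)^2" by simp
  thus ?thesis by (simp add: power2_eq_square algebra_simps)
qed

lemma sum_offdiag_bound:
  fixes rho :: "'i \<Rightarrow> int"
  assumes I: "finite I" and inj: "inj_on rho I" and i: "i \<in> I"
  shows "(\<Sum>j\<in>I - {i}. 1 / (4 * (of_int (rho i - rho j))^2 - 1 :: real)) \<le> 1"
proof -
  have inj2: "inj_on (\<lambda>j. rho i - rho j) (I - {i})"
    using inj by (auto simp: inj_on_def)
  have "(\<Sum>j\<in>I - {i}. 1 / (4 * (of_int (rho i - rho j))^2 - 1 :: real))
      = (\<Sum>k\<in>(\<lambda>j. rho i - rho j) ` (I - {i}). 1 / (4 * (of_int k)^2 - 1 :: real))"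
    by (simp add: sum.reindex[OF inj2])
  also have "\<dots> \<le> 1"
  proof (rule sum_4k2_le)
    show "finite ((\<lambda>j. rho i - rho j) ` (I - {i}))" using I by simp
    show "0 \<notin> (\<lambda>j. rho i - rho j) ` (I - {i})"
      using inj i by (auto simp: inj_on_def)
  qed
  finally show ?thesis .
qed

lemma sum_split_diag:
  assumes "finite I"
  shows "(\<Sum>i\<in>I. \<Sum>j\<in>I. F i j) = (\<Sum>i\<in>I. F i i) + (\<Sum>i\<in>I. \<Sum>j\<in>I. if i = j then 0 else F i j)"
proof -
  have "(\<Sum>j\<in>I. F i j) = F i i + (\<Sum>j\<in>I. if i = j then 0 else F i j)" if "i \<in> I" for i
  proof -
    have "(\<Sum>j\<in>I. F i j) = (\<Sum>j\<in>I. (if i = j then F i j else 0) + (if i = j then 0 else F i j))"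
      by (intro sum.cong) auto
    also have "\<dots> = F i i + (\<Sum>j\<in>I. if i = j then 0 else F i j)"
      using assms that by (simp add: sum.distrib)
    finally show ?thesis .
  qed
  then show ?thesis by (simp add: sum.distrib)
qed

lemma sum_if_remove:
  assumes "finite I" "i \<in> I"
  shows "(\<Sum>j\<in>I. if i = j then 0 else f j) = (\<Sum>j\<in>I - {i}. f j)"
proof -
  have "(\<Sum>j\<in>I. if i = j then 0 else f j) = (if i = i then 0 else f i) + (\<Sum>j\<in>I - {i}. if i = j then 0 else f j)"
    using assms by (simp add: sum.remove)
  also have "\<dots> = (\<Sum>j\<in>I - {i}. f j)" by (simp, intro sum.cong) auto
  finally show ?thesis .
qed

lemma gram:
  fixes a lam :: "'i \<Rightarrow> complex" and rho :: "'i \<Rightarrow> int"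
  assumes I: "finite I" and inj: "inj_on rho I" and T: "T > 0" and g: "g > 0"
    and eta: "0 < \<eta>" "\<eta> \<le> 1" and Y0: "Y \<ge> 0"
    and gap: "\<And>i j. i \<in> I \<Longrightarrow> j \<in> I \<Longrightarrow> g * \<bar>of_int (rho i - rho j)\<bar> \<le> \<bar>Re (lam i) - Re (lam j)\<bar>"
    and Yb: "\<And>i. i \<in> I \<Longrightarrow> \<bar>Im (lam i)\<bar> \<le> Y"
    and A: "4 * ((pi/T)^2 + 4 * Y^2) \<le> (1 - \<eta>) * g^2"
  shows "\<exists>Q. ((\<lambda>t. sin (pi * t / T) * (cmod (\<Sum>i\<in>I. a i * exp (\<i> * lam i * of_real t)))^2) has_integral Q) {0..T}
      \<and> \<eta> * (\<Sum>i\<in>I. (cmod (a i))^2 * Kr T (Im (lam i))) \<le> Q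
      \<and> Q \<le> 2 * (\<Sum>i\<in>I. (cmod (a i))^2 * Kr T (Im (lam i)))"
proof -
  define b where "b = pi / T"
  have bpos: "b > 0" using T by (simp add: b_def)
  define AA where "AA = b^2 + 4 * Y^2"
  have AApos: "AA > 0" using bpos by (simp add: AA_def add_pos_nonneg)
  have AA4: "4 * AA \<le> (1 - \<eta>) * g^2" using A by (simp add: AA_def b_def)
  have AAg: "4 * AA \<le> g^2"
  proof -
    have "0 \<le> \<eta> * g^2" using eta by simp
    hence "(1 - \<eta>) * g^2 \<le> g^2" by (simp add: algebra_simps)
    thus ?thesis using AA4 by linarith
  qed
  define mu where "mu i j = lam i - cnj (lam j)" for i j
  define S where "S = (\<Sum>i\<in>I. (cmod (a i))^2 * Kr T (Im (lam i)))"
  define w where "w i = 1 + exp (-2 * Im (lam i) * T)" for i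
  define P where "P i = (cmod (a i))^2 * w i" for i
  define h where "h i j = b / (g^2 * (of_int (rho i - rho j))^2 - AA)" for i j
  have Re_mu: "Re (mu i j) = Re (lam i) - Re (lam j)" for i j by (simp add: mu_def)
  have Im_mu: "Im (mu i j) = Im (lam i) + Im (lam j)" for i j by (simp add: mu_def)
  have diag: "mu i i = of_real (2 * Im (lam i)) * \<i>" for i by (simp add: mu_def complex_diff_cnj)
  have off: "g^2 * (of_int (rho i - rho j))^2 - AA > 0 \<and>
             g^2 * (of_int (rho i - rho j))^2 - AA \<le> (Re (mu i j))^2 - (Im (mu i j))^2 - b^2 \<and>
             g^2 * (of_int (rho i - rho j))^2 - AA \<ge> g^2 / 4 * (4 * (of_int (rho i - rho j))^2 - 1)"
    if ij: "i \<in> I" "j \<in> I" "i \<noteq> j" for i j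
  proof -
    define k where "k = (of_int (rho i - rho j) :: real)"
    have "rho i \<noteq> rho j" using inj ij by (auto simp: inj_on_def)
    hence "\<bar>rho i - rho j\<bar> \<ge> 1" by linarith
    hence k1: "\<bar>k\<bar> \<ge> 1" unfolding k_def by linarith
    hence k2: "k^2 \<ge> 1" using one_le_power[of "\<bar>k\<bar>" 2] by simp
    have "\<bar>g * \<bar>k\<bar>\<bar> \<le> \<bar>Re (mu i j)\<bar>" using gap[OF ij(1,2)] g by (simp add: k_def Re_mu)
    hence "(g * \<bar>k\<bar>)^2 \<le> (Re (mu i j))^2" by (simp only: abs_le_square_iff)
    hence x2: "g^2 * k^2 \<le> (Re (mu i j))^2" by (simp add: power_mult_distrib)
    have "\<bar>Im (mu i j)\<bar> \<le> \<bar>2 * Y\<bar>" using Yb[OF ij(1)] Yb[OF ij(2)] Y0 by (simp add: Im_mu)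
    hence "(Im (mu i j))^2 \<le> (2 * Y)^2" by (simp only: abs_le_square_iff)
    hence y2: "(Im (mu i j))^2 \<le> 4 * Y^2" by (simp add: power_mult_distrib)
    have gk: "g^2 * k^2 \<ge> g^2" using k2 g by simp
    have g2: "g^2 > 0" using g by simp
    show ?thesis unfolding k_def[symmetric]
    proof (intro conjI)
      show "g^2 * k^2 - AA > 0" using gk AAg AApos g2 by linarith
      show "g^2 * k^2 - AA \<le> (Re (mu i j))^2 - (Im (mu i j))^2 - b^2" using x2 y2 by (simp add: AA_def)
      show "g^2 * k^2 - AA \<ge> g^2 / 4 * (4 * k^2 - 1)" using AAg by (simp add: algebra_simps)
    qed
  qed
  have ne: "of_real ((pi/T)^2) \<noteq> (mu i j)^2" if ij: "i \<in> I" "j \<in> I" for i j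
  proof (cases "i = j")
    case True
    have "(mu i j)^2 = of_real (- (4 * (Im (lam i))^2))"
      using True by (simp add: diag power2_eq_square algebra_simps)
    moreover have "(pi/T)^2 \<noteq> - (4 * (Im (lam i))^2)"
    proof -
      have "(pi/T)^2 > 0" using T by simp
      moreover have "- (4 * (Im (lam i))^2) \<le> 0" by simp
      ultimately show ?thesis by linarith
    qed
    ultimately show ?thesis by (metis of_real_eq_iff)
  next
    case False
    have "Re ((mu i j)^2) = (Re (mu i j))^2 - (Im (mu i j))^2" by (simp add: power2_eq_square)
    moreover have "(Re (mu i j))^2 - (Im (mu i j))^2 - b^2 > 0" using off[OF ij False] by linarith
    ultimately have "Re ((mu i j)^2) \<noteq> Re (of_real ((pi/T)^2))" by (simp add: b_def)
    thus ?thesis by metis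
  qed
  have hint: "((\<lambda>t. sin (pi*t/T) * (cmod (\<Sum>i\<in>I. a i * exp (\<i> * lam i * of_real t)))^2) has_integral
          Re (\<Sum>i\<in>I. \<Sum>j\<in>I. a i * cnj (a j) * Kc T (mu i j))) {0..T}"
    using gram_integral[OF I T, of lam a] ne by (simp add: mu_def)
  define F where "F i j = a i * cnj (a j) * Kc T (mu i j)" for i j
  define Off where "Off = (\<Sum>i\<in>I. \<Sum>j\<in>I. if i = j then 0 else F i j)"
  have split: "(\<Sum>i\<in>I. \<Sum>j\<in>I. a i * cnj (a j) * Kc T (mu i j)) = of_real S + Off"
  proof -
    have "(\<Sum>i\<in>I. \<Sum>j\<in>I. a i * cnj (a j) * Kc T (mu i j)) = (\<Sum>i\<in>I. F i i) + Off"
      unfolding F_def Off_def by (rule sum_split_diag[OF I])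
    moreover have "F i i = of_real ((cmod (a i))^2 * Kr T (Im (lam i)))" for i
    proof -
      have "a i * cnj (a i) = of_real ((cmod (a i))^2)" by (rule complex_norm_square[symmetric])
      thus ?thesis unfolding F_def diag using Kc_diag[OF T] by simp
    qed
    ultimately show ?thesis by (simp add: S_def)
  qed
  have Fb: "cmod (F i j) \<le> (P i + P j) / 2 * h i j" if ij: "i \<in> I" "j \<in> I" "i \<noteq> j" for i j
  proof -
    note o = off[OF ij]
    define D where "D = g^2 * (of_int (rho i - rho j))^2 - AA"
    have Dpos: "D > 0" using o by (simp add: D_def)
    have "cmod (Kc T (mu i j)) \<le> b * (1 + exp (- Im (mu i j) * T)) / ((Re (mu i j))^2 - (Im (mu i j))^2 - b^2)"
      using Kc_bound[OF T, of "mu i j"] o unfolding b_def by linarith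
    also have "\<dots> \<le> b * (1 + exp (- Im (mu i j) * T)) / D"
      apply (rule divide_left_mono) using o Dpos bpos by (auto simp: D_def intro!: mult_nonneg_nonneg add_nonneg_nonneg)
    also have "\<dots> \<le> b * (sqrt (w i) * sqrt (w j)) / D"
    proof -
      have "1 + exp (- Im (mu i j) * T) \<le> sqrt (w i) * sqrt (w j)"
        using exp_sqrt_ineq[of "Im (lam i)" "Im (lam j)" T] by (simp add: w_def Im_mu)
      thus ?thesis using bpos Dpos by (intro divide_right_mono mult_left_mono) auto
    qed
    finally have K1: "cmod (Kc T (mu i j)) \<le> b * (sqrt (w i) * sqrt (w j)) / D" .
    have "cmod (F i j) = cmod (a i) * cmod (a j) * cmod (Kc T (mu i j))" by (simp add: F_def norm_mult)
    also have "\<dots> \<le> cmod (a i) * cmod (a j) * (b * (sqrt (w i) * sqrt (w j)) / D)"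
      by (intro mult_left_mono K1) auto
    also have "\<dots> = ((cmod (a i) * sqrt (w i)) * (cmod (a j) * sqrt (w j))) * (b / D)"
      by (simp add: algebra_simps)
    also have "\<dots> \<le> (((cmod (a i) * sqrt (w i))^2 + (cmod (a j) * sqrt (w j))^2) / 2) * (b / D)"
      using bpos Dpos by (intro mult_right_mono amgm2) auto
    also have "((cmod (a i) * sqrt (w i))^2 + (cmod (a j) * sqrt (w j))^2) = P i + P j"
    proof -
      have "w i \<ge> 0" "w j \<ge> 0" by (auto simp: w_def intro: add_nonneg_nonneg)
      thus ?thesis by (simp add: P_def power_mult_distrib)
    qed
    finally show ?thesis by (simp add: h_def D_def)
  qed
  have hsym: "h i j = h j i" for i j
  proof -
    have "(of_int (rho i - rho j) :: real)^2 = (of_int (rho j - rho i))^2"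
      by (simp add: power2_eq_square algebra_simps)
    thus ?thesis by (simp add: h_def)
  qed
  have OffB: "cmod Off \<le> (\<Sum>i\<in>I. \<Sum>j\<in>I. if i = j then 0 else (P i + P j) / 2 * h i j)"
    unfolding Off_def
    apply (rule order_trans[OF norm_sum])
    apply (rule sum_mono)
    apply (rule order_trans[OF norm_sum])
    apply (rule sum_mono)
    using Fb by auto
  have swap: "(\<Sum>i\<in>I. \<Sum>j\<in>I. if i = j then 0 else P j * h i j) = (\<Sum>i\<in>I. \<Sum>j\<in>I. if i = j then 0 else P i * h i j)"
  proof -
    have "(\<Sum>i\<in>I. \<Sum>j\<in>I. if i = j then 0 else P j * h i j) = (\<Sum>j\<in>I. \<Sum>i\<in>I. if i = j then 0 else P j * h i j)"
      by (rule sum.swap)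
    also have "\<dots> = (\<Sum>i\<in>I. \<Sum>j\<in>I. if i = j then 0 else P i * h i j)"
      by (intro sum.cong refl) (auto simp: hsym)
    finally show ?thesis .
  qed
  have sym2: "(\<Sum>i\<in>I. \<Sum>j\<in>I. if i = j then 0 else (P i + P j) / 2 * h i j) = (\<Sum>i\<in>I. \<Sum>j\<in>I. if i = j then 0 else P i * h i j)"
  proof -
    have "(\<Sum>i\<in>I. \<Sum>j\<in>I. if i = j then 0 else (P i + P j) / 2 * h i j)
        = (\<Sum>i\<in>I. \<Sum>j\<in>I. (if i = j then 0 else P i * h i j) / 2 + (if i = j then 0 else P j * h i j) / 2)"
      by (intro sum.cong refl) (auto simp: field_simps)
    also have "\<dots> = (\<Sum>i\<in>I. \<Sum>j\<in>I. if i = j then 0 else P i * h i j) / 2 + (\<Sum>i\<in>I. \<Sum>j\<in>I. if i = j then 0 else P j * h i j) / 2"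
      by (simp add: sum.distrib sum_divide_distrib)
    finally show ?thesis using swap by simp
  qed
  have rowb: "(\<Sum>j\<in>I. if i = j then 0 else P i * h i j) \<le> (1 - \<eta>) * ((cmod (a i))^2 * Kr T (Im (lam i)))"
    if i: "i \<in> I" for i
  proof -
    have "(\<Sum>j\<in>I. if i = j then 0 else P i * h i j) = (\<Sum>j\<in>I - {i}. P i * h i j)"
      by (rule sum_if_remove[OF I i])
    also have "\<dots> \<le> (\<Sum>j\<in>I - {i}. P i * b * (4 / g^2) * (1 / (4 * (of_int (rho i - rho j))^2 - 1)))"
    proof (rule sum_mono)
      fix j assume j: "j \<in> I - {i}"
      hence o: "g^2 * (of_int (rho i - rho j))^2 - AA > 0"
         "g^2 * (of_int (rho i - rho j))^2 - AA \<ge> g^2 / 4 * (4 * (of_int (rho i - rho j))^2 - 1)"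
        using off[OF i, of j] by auto
      have P0: "P i \<ge> 0" by (auto simp: P_def w_def intro!: mult_nonneg_nonneg add_nonneg_nonneg)
      have q: "4 * (of_int (rho i - rho j))^2 - 1 > (0::real)"
      proof -
        have "rho i \<noteq> rho j" using inj i j by (auto simp: inj_on_def)
        hence "\<bar>rho i - rho j\<bar> \<ge> 1" by linarith
        hence "\<bar>of_int (rho i - rho j) :: real\<bar> \<ge> 1" by linarith
        hence "(of_int (rho i - rho j) :: real)^2 \<ge> 1" using one_le_power[of "\<bar>of_int (rho i - rho j) :: real\<bar>" 2] by simp
        thus ?thesis by linarith
      qed
      have "h i j = b / (g^2 * (of_int (rho i - rho j))^2 - AA)" by (simp add: h_def)
      also have "\<dots> \<le> b / (g^2 / 4 * (4 * (of_int (rho i - rho j))^2 - 1))"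
        apply (rule divide_left_mono) using o bpos q g by auto
      also have "\<dots> = b * (4 / g^2) * (1 / (4 * (of_int (rho i - rho j))^2 - 1))"
        using g q by (simp add: field_simps)
      finally have "h i j \<le> b * (4 / g^2) * (1 / (4 * (of_int (rho i - rho j))^2 - 1))" .
      from mult_left_mono[OF this P0]
      show "P i * h i j \<le> P i * b * (4 / g^2) * (1 / (4 * (of_int (rho i - rho j))^2 - 1))"
        by (simp only: mult.assoc)
    qed
    also have "\<dots> = P i * b * (4 / g^2) * (\<Sum>j\<in>I - {i}. 1 / (4 * (of_int (rho i - rho j))^2 - 1))"
      by (simp add: sum_distrib_left)
    also have "\<dots> \<le> P i * b * (4 / g^2) * 1"
      apply (rule mult_left_mono[OF sum_offdiag_bound[OF I inj i]])
      using bpos g by (auto simp: P_def w_def intro!: mult_nonneg_nonneg add_nonneg_nonneg)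
    also have "\<dots> \<le> (1 - \<eta>) * ((cmod (a i))^2 * Kr T (Im (lam i)))"
    proof -
      have den: "b^2 + 4 * (Im (lam i))^2 > 0" using bpos by (simp add: add_pos_nonneg)
      have y2: "(Im (lam i))^2 \<le> Y^2" using Yb[OF i] Y0 by (simp add: abs_le_square_iff[symmetric])
      have Kr_eq: "b * w i = Kr T (Im (lam i)) * (b^2 + 4 * (Im (lam i))^2)"
        using den by (simp add: Kr_def w_def b_def)
      have Krp: "Kr T (Im (lam i)) > 0" by (rule Kr_pos[OF T])
      have "b * w i \<le> Kr T (Im (lam i)) * AA"
        unfolding Kr_eq AA_def using Krp y2 by (intro mult_left_mono) auto
      hence "(cmod (a i))^2 * (b * w i) * (4 / g^2) \<le> (cmod (a i))^2 * (Kr T (Im (lam i)) * AA) * (4 / g^2)"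
        using g by (intro mult_right_mono mult_left_mono) auto
      also have "\<dots> = (cmod (a i))^2 * Kr T (Im (lam i)) * (4 * AA / g^2)" by (simp add: algebra_simps)
      also have "\<dots> \<le> (cmod (a i))^2 * Kr T (Im (lam i)) * (1 - \<eta>)"
      proof (rule mult_left_mono)
        show "4 * AA / g^2 \<le> 1 - \<eta>" using AA4 g by (simp add: divide_le_eq mult.commute)
        show "0 \<le> (cmod (a i))^2 * Kr T (Im (lam i))" using Krp by simp
      qed
      finally show ?thesis by (simp add: P_def algebra_simps)
    qed
    finally show ?thesis .
  qed
  have OffS: "cmod Off \<le> (1 - \<eta>) * S"
  proof -
    have "cmod Off \<le> (\<Sum>i\<in>I. \<Sum>j\<in>I. if i = j then 0 else P i * h i j)" using OffB sym2 by simp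
    also have "\<dots> \<le> (\<Sum>i\<in>I. (1 - \<eta>) * ((cmod (a i))^2 * Kr T (Im (lam i))))"
      by (rule sum_mono) (rule rowb)
    also have "\<dots> = (1 - \<eta>) * S" by (simp add: S_def sum_distrib_left)
    finally show ?thesis .
  qed
  have S0: "S \<ge> 0" unfolding S_def using Kr_pos[OF T] by (intro sum_nonneg) (simp add: less_imp_le)
  have ReOff: "\<bar>Re Off\<bar> \<le> (1 - \<eta>) * S" using abs_Re_le_cmod[of Off] OffS by linarith
  show ?thesis
  proof (intro exI conjI)
    show "((\<lambda>t. sin (pi * t / T) * (cmod (\<Sum>i\<in>I. a i * exp (\<i> * lam i * of_real t)))^2) has_integral (S + Re Off)) {0..T}"
      using hint unfolding split by simp
    show "\<eta> * (\<Sum>i\<in>I. (cmod (a i))^2 * Kr T (Im (lam i))) \<le> S + Re Off"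
      using ReOff S0 unfolding S_def[symmetric] by (simp add: algebra_simps)
    show "S + Re Off \<le> 2 * (\<Sum>i\<in>I. (cmod (a i))^2 * Kr T (Im (lam i)))"
    proof -
      have "0 \<le> \<eta> * S" using S0 eta by simp
      moreover have "(1 - \<eta>) * S = S - \<eta> * S" by (simp add: algebra_simps)
      ultimately show ?thesis using ReOff unfolding S_def[symmetric] by linarith
    qed
  qed
qed

lemma mono_gap:
  fixes f :: "nat \<Rightarrow> real"
  assumes step: "\<And>n. n \<ge> m \<Longrightarrow> f (Suc n) - f n \<ge> g"
  shows "m \<le> n1 \<Longrightarrow> n1 \<le> n2 \<Longrightarrow> f n2 - f n1 \<ge> g * (real n2 - real n1)"
proof (induction n2)
  case 0
  then show ?case by simp
next
  case (Suc n)
  show ?case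
  proof (cases "n1 = Suc n")
    case True
    then show ?thesis by simp
  next
    case False
    hence "n1 \<le> n" using Suc.prems by simp
    hence ih: "f n - f n1 \<ge> g * (real n - real n1)" using Suc by simp
    have "f (Suc n) - f n \<ge> g" using step \<open>n1 \<le> n\<close> Suc.prems by simp
    with ih show ?thesis by (simp add: algebra_simps)
  qed
qed

definition famA :: "(nat \<Rightarrow> complex) \<Rightarrow> nat \<times> bool \<Rightarrow> complex" where
  "famA c x = (if snd x then c (fst x) else cnj (c (fst x)))"
definition famL :: "(nat \<Rightarrow> complex) \<Rightarrow> nat \<times> bool \<Rightarrow> complex" where
  "famL lam x = (if snd x then lam (fst x) else - cnj (lam (fst x)))"
definition famR :: "nat \<Rightarrow> nat \<times> bool \<Rightarrow> int" where
  "famR m x = (if snd x then int (fst x) - int m else - (int (fst x) - int m) - 1)"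

lemma fam_sum_eq:
  "(\<Sum>n\<in>{m..<N}. c n * exp (\<i> * lam n * of_real t) + cnj (c n) * exp (- \<i> * cnj (lam n) * of_real t))
   = (\<Sum>x\<in>{m..<N} \<times> (UNIV::bool set). famA c x * exp (\<i> * famL lam x * of_real t))"
proof -
  have "(\<Sum>x\<in>{m..<N} \<times> (UNIV::bool set). famA c x * exp (\<i> * famL lam x * of_real t))
      = (\<Sum>n\<in>{m..<N}. \<Sum>b\<in>(UNIV::bool set). famA c (n, b) * exp (\<i> * famL lam (n, b) * of_real t))"
    by (simp add: sum.cartesian_product)
  also have "\<dots> = (\<Sum>n\<in>{m..<N}. c n * exp (\<i> * lam n * of_real t) + cnj (c n) * exp (- \<i> * cnj (lam n) * of_real t))"
    by (intro sum.cong refl) (simp add: UNIV_bool famA_def famL_def)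
  finally show ?thesis by simp
qed

lemma fam_S_eq:
  "(\<Sum>x\<in>{m..<N} \<times> (UNIV::bool set). (cmod (famA c x))^2 * Kr T (Im (famL lam x)))
   = 2 * (\<Sum>n\<in>{m..<N}. (cmod (c n))^2 * Kr T (Im (lam n)))"
proof -
  have "(\<Sum>x\<in>{m..<N} \<times> (UNIV::bool set). (cmod (famA c x))^2 * Kr T (Im (famL lam x)))
      = (\<Sum>n\<in>{m..<N}. \<Sum>b\<in>(UNIV::bool set). (cmod (famA c (n, b)))^2 * Kr T (Im (famL lam (n, b))))"
    by (simp add: sum.cartesian_product)
  also have "\<dots> = (\<Sum>n\<in>{m..<N}. 2 * ((cmod (c n))^2 * Kr T (Im (lam n))))"
    by (intro sum.cong refl) (simp add: UNIV_bool famA_def famL_def)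
  finally show ?thesis by (simp add: sum_distrib_left)
qed

lemma fam:
  fixes c lam :: "nat \<Rightarrow> complex"
  assumes T: "T > 0" and g: "g > 0" and eta: "0 < \<eta>" "\<eta> \<le> 1" and Y0: "Y \<ge> 0"
    and step: "\<And>n. n \<ge> m \<Longrightarrow> Re (lam (Suc n)) - Re (lam n) \<ge> g"
    and start: "Re (lam m) \<ge> g / 2"
    and Yb: "\<And>n. n \<ge> m \<Longrightarrow> \<bar>Im (lam n)\<bar> \<le> Y"
    and A: "4 * ((pi/T)^2 + 4 * Y^2) \<le> (1 - \<eta>) * g^2"
  shows "\<exists>Q. ((\<lambda>t. sin (pi * t / T) * (cmod (\<Sum>n\<in>{m..<N}. c n * exp (\<i> * lam n * of_real t) + cnj (c n) * exp (- \<i> * cnj (lam n) * of_real t)))^2) has_integral Q) {0..T}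
      \<and> 2 * \<eta> * (\<Sum>n\<in>{m..<N}. (cmod (c n))^2 * Kr T (Im (lam n))) \<le> Q
      \<and> Q \<le> 4 * (\<Sum>n\<in>{m..<N}. (cmod (c n))^2 * Kr T (Im (lam n)))"
proof -
  let ?I = "{m..<N} \<times> (UNIV::bool set)"
  have mg: "Re (lam n2) - Re (lam n1) \<ge> g * (real n2 - real n1)" if "m \<le> n1" "n1 \<le> n2" for n1 n2
    using mono_gap[where f="\<lambda>n. Re (lam n)" and m=m and g=g, of n1 n2] step that by simp
  have lb: "Re (lam n) \<ge> g / 2 + g * (real n - real m)" if "m \<le> n" for n
    using mg[of m n] start that by simp
  have inj: "inj_on (famR m) ?I"
    by (auto simp: inj_on_def famR_def split: if_splits)
  have gap: "g * \<bar>of_int (famR m i - famR m j)\<bar> \<le> \<bar>Re (famL lam i) - Re (famL lam j)\<bar>"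
    if "i \<in> ?I" "j \<in> ?I" for i j
  proof -
    obtain n1 b1 n2 b2 where ij: "i = (n1, b1)" "j = (n2, b2)" by (cases i, cases j) auto
    have n: "m \<le> n1" "m \<le> n2" using that ij by auto
    have same: "g * \<bar>real n1 - real n2\<bar> \<le> \<bar>Re (lam n1) - Re (lam n2)\<bar>"
    proof (cases "n1 \<le> n2")
      case True
      then show ?thesis using mg[OF n(1) True] g by (simp add: abs_if algebra_simps split: if_splits)
    next
      case False
      then show ?thesis using mg[OF n(2), of n1] g by (simp add: abs_if algebra_simps split: if_splits)
    qed
    have cross: "g * (real n1 - real m + (real n2 - real m) + 1) \<le> Re (lam n1) + Re (lam n2)"
      using lb[OF n(1)] lb[OF n(2)] by (simp add: algebra_simps)
    have nn: "0 \<le> real n1 - real m" "0 \<le> real n2 - real m" using n by auto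
    show ?thesis
      using same cross nn g unfolding ij
      by (cases b1; cases b2) (auto simp: famR_def famL_def abs_if algebra_simps split: if_splits)
  qed
  have Yb2: "\<bar>Im (famL lam i)\<bar> \<le> Y" if "i \<in> ?I" for i
    using Yb that by (auto simp: famL_def)
  obtain Q where Q: "((\<lambda>t. sin (pi * t / T) * (cmod (\<Sum>i\<in>?I. famA c i * exp (\<i> * famL lam i * of_real t)))^2) has_integral Q) {0..T}"
    "\<eta> * (\<Sum>i\<in>?I. (cmod (famA c i))^2 * Kr T (Im (famL lam i))) \<le> Q"
    "Q \<le> 2 * (\<Sum>i\<in>?I. (cmod (famA c i))^2 * Kr T (Im (famL lam i)))"
    using gram[OF _ inj T g eta Y0 gap Yb2 A, of "famA c"] by auto
  show ?thesis
    apply (rule exI[of _ Q])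
    using Q unfolding fam_sum_eq fam_S_eq by (simp add: algebra_simps)
qed

lemma Kr_exp_integral:
  assumes T: "T > 0"
  shows "((\<lambda>t. sin (pi * t / T) * exp (-2 * s * t)) has_integral Kr T s) {0..T}"
proof -
  have ne: "of_real ((pi/T)^2) \<noteq> (of_real (2 * s) * \<i> :: complex)^2"
  proof -
    have "(of_real (2 * s) * \<i> :: complex)^2 = of_real (- (4 * s^2))" by (simp add: power2_eq_square algebra_simps)
    moreover have "(pi/T)^2 \<noteq> - (4 * s^2)"
    proof -
      have "(pi/T)^2 > 0" using T by simp
      moreover have "- (4 * s^2) \<le> 0" by simp
      ultimately show ?thesis by linarith
    qed
    ultimately show ?thesis by (metis of_real_eq_iff)
  qed
  have h: "((Re \<circ> (\<lambda>t. of_real (sin (pi * t/T)) * exp (\<i> * (of_real (2 * s) * \<i>) * of_real t))) has_integral Re (Kc T (of_real (2 * s) * \<i>))) {0..T}"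
    by (rule has_integral_linear[OF Kc_integral[OF T ne] bounded_linear_Re])
  have e: "(Re \<circ> (\<lambda>t. of_real (sin (pi * t/T)) * exp (\<i> * (of_real (2 * s) * \<i>) * of_real t))) = (\<lambda>t. sin (pi * t / T) * exp (-2 * s * t))"
  proof
    fix t
    have "exp (\<i> * (of_real (2 * s) * \<i>) * of_real t) = (of_real (exp (-2 * s * t)) :: complex)"
      by (simp add: exp_of_real[symmetric] algebra_simps)
    thus "(Re \<circ> (\<lambda>t. of_real (sin (pi * t/T)) * exp (\<i> * (of_real (2 * s) * \<i>) * of_real t))) t = sin (pi * t / T) * exp (-2 * s * t)"
      by simp
  qed
  show ?thesis using h unfolding e Kc_diag[OF T] by simp
qed

lemma Kr_lower:
  assumes T: "T > 0" and y: "\<bar>y\<bar> \<le> Y"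
  shows "(pi/T) * (1 + exp (-2 * y * T)) / ((pi/T)^2 + 4 * Y^2) \<le> Kr T y"
  unfolding Kr_def
proof (rule divide_left_mono)
  have "y^2 \<le> Y^2" using y by (metis abs_le_square_iff abs_of_nonneg abs_ge_zero order_trans power2_abs)
  thus "(pi/T)^2 + 4 * y^2 \<le> (pi/T)^2 + 4 * Y^2" by simp
  show "0 \<le> pi / T * (1 + exp (-2 * y * T))" using T by (intro mult_nonneg_nonneg add_nonneg_nonneg) auto
  show "0 < ((pi/T)^2 + 4 * Y^2) * ((pi/T)^2 + 4 * y^2)" using T by (intro mult_pos_pos add_pos_nonneg) auto
qed

lemma Kr_upper:
  assumes T: "T > 0" and y: "\<bar>y\<bar> \<le> Y"
  shows "Kr T y \<le> (pi/T) * (1 + exp (2 * Y * T)) / ((pi/T)^2)"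
  unfolding Kr_def
proof (rule frac_le)
  have h: "(-y) * T \<le> Y * T" using mult_right_mono[of "-y" Y T] y T by (simp add: abs_le_iff)
  have "-2 * y * T \<le> 2 * Y * T" using h by (simp add: algebra_simps)
  hence "exp (-2 * y * T) \<le> exp (2 * Y * T)" by simp
  thus "pi / T * (1 + exp (-2 * y * T)) \<le> pi / T * (1 + exp (2 * Y * T))" using T by (intro mult_left_mono) auto
  show "0 \<le> pi / T * (1 + exp (2 * Y * T))" using T by (intro mult_nonneg_nonneg add_nonneg_nonneg) auto
  show "0 < (pi/T)^2" using T by simp
  show "(pi/T)^2 \<le> (pi/T)^2 + 4 * y^2" by simp
qed

lemma Kr_ratio:
  assumes T: "T > 0" and s: "s > 0" and y: "\<bar>y\<bar> \<le> Y"
  shows "Kr T s \<le> 2 * (1 + Y^2 / s^2) * Kr T y"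
proof -
  define b where "b = pi / T"
  have b: "b > 0" using T by (simp add: b_def)
  have y2: "y^2 \<le> Y^2" using y by (metis abs_le_square_iff abs_of_nonneg abs_ge_zero order_trans power2_abs)
  have d1: "b^2 + 4 * s^2 > 0" "b^2 + 4 * y^2 > 0" using b by (auto intro: add_pos_nonneg)
  have "Kr T s \<le> 2 * b / (b^2 + 4 * s^2)"
    unfolding Kr_def b_def[symmetric]
  proof -
    have "exp (-2 * s * T) \<le> 1" using s T by simp
    hence "b * (1 + exp (-2 * s * T)) \<le> 2 * b" using b by simp
    thus "b * (1 + exp (-2 * s * T)) / (b^2 + 4 * s^2) \<le> 2 * b / (b^2 + 4 * s^2)"
      using d1 by (simp add: divide_right_mono)
  qed
  also have "\<dots> \<le> 2 * (1 + Y^2 / s^2) * (b / (b^2 + 4 * y^2))"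
  proof -
    have "b^2 + 4 * y^2 \<le> (1 + Y^2/s^2) * (b^2 + 4 * s^2)"
    proof -
      have "(1 + Y^2/s^2) * (b^2 + 4 * s^2) = b^2 + 4 * s^2 + b^2 * Y^2/s^2 + 4 * Y^2"
        using s by (simp add: field_simps)
      moreover have "b^2 * Y^2/s^2 \<ge> 0" by simp
      moreover have "s^2 \<ge> 0" by simp
      ultimately show ?thesis using y2 by linarith
    qed
    hence "2 * b / (b^2 + 4 * s^2) \<le> 2 * b * (1 + Y^2/s^2) / (b^2 + 4 * y^2)"
    proof -
      assume ineq: "b^2 + 4 * y^2 \<le> (1 + Y^2/s^2) * (b^2 + 4 * s^2)"
      define K where "K = 1 + Y^2/s^2"
      have K: "K > 0" unfolding K_def by (simp add: add_pos_nonneg)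
      have "2 * b / (b^2 + 4 * s^2) = (2 * b * K) / (K * (b^2 + 4 * s^2))" using K by simp
      also have "\<dots> \<le> (2 * b * K) / (b^2 + 4 * y^2)"
        apply (rule divide_left_mono) using ineq K b d1 unfolding K_def by auto
      finally show ?thesis unfolding K_def .
    qed
    thus ?thesis by (simp add: field_simps)
  qed
  also have "b / (b^2 + 4 * y^2) \<le> Kr T y"
    unfolding Kr_def b_def[symmetric]
    using d1 b by (intro divide_right_mono) auto
  hence "2 * (1 + Y^2 / s^2) * (b / (b^2 + 4 * y^2)) \<le> 2 * (1 + Y^2 / s^2) * Kr T y"
    using s by (intro mult_left_mono) (auto intro: add_nonneg_nonneg)
  finally show ?thesis .
qed

lemma real_l3:
  fixes X a p q :: real
  assumes "0 \<le> X" "X \<le> a + p + q" "0 \<le> a" "0 \<le> p" "0 \<le> q"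
  shows "X^2 / 2 - 2 * p^2 - 2 * q^2 \<le> a^2"
proof -
  have "X^2 \<le> (a + p + q)^2" using assms by (intro power_mono) auto
  moreover have "(a + p + q)^2 = 2 * a^2 + 2 * (p + q)^2 - (a - (p + q))^2" by (simp add: power2_eq_square algebra_simps)
  moreover have "(p + q)^2 = 2 * p^2 + 2 * q^2 - (p - q)^2" by (simp add: power2_eq_square algebra_simps)
  moreover have "0 \<le> (a - (p + q))^2" "0 \<le> (p - q)^2" by simp_all
  ultimately show ?thesis by linarith
qed

lemma real_l2:
  fixes X a p :: real
  assumes "0 \<le> X" "X \<le> a + p" "0 \<le> a" "0 \<le> p"
  shows "X^2 / 2 - p^2 \<le> a^2"
proof -
  have "X^2 \<le> (a + p)^2" using assms by (intro power_mono) auto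
  moreover have "(a + p)^2 = 2 * a^2 + 2 * p^2 - (a - p)^2" by (simp add: power2_eq_square algebra_simps)
  moreover have "0 \<le> (a - p)^2" by simp
  ultimately show ?thesis by linarith
qed

lemma pw_lower3: "(cmod x)^2 / 2 - 2 * (cmod y)^2 - 2 * (cmod z)^2 \<le> (cmod (x + y + z))^2"
proof -
  have "cmod x \<le> cmod (x + y + z) + cmod y + cmod z"
    using norm_triangle_ineq4[of "x + y + z" "y + z"] norm_triangle_ineq[of y z] by (simp add: algebra_simps)
  thus ?thesis by (intro real_l3) auto
qed

lemma pw_lower2: "(cmod x)^2 / 2 - (cmod y)^2 \<le> (cmod (x + y))^2"
proof -
  have "cmod x \<le> cmod (x + y) + cmod y"
    using norm_triangle_ineq4[of "x + y" y] by simp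
  thus ?thesis by (intro real_l2) auto
qed

lemma pw_upper3: "(cmod (x + y + z))^2 \<le> 3 * ((cmod x)^2 + (cmod y)^2 + (cmod z)^2)"
proof -
  have "cmod (x + y + z) \<le> cmod x + cmod y + cmod z"
    by (metis add_mono norm_triangle_ineq order_trans order_refl)
  hence "(cmod (x + y + z))^2 \<le> (cmod x + cmod y + cmod z)^2" by (intro power_mono) auto
  moreover have "(cmod x + cmod y + cmod z)^2 = 3 * ((cmod x)^2 + (cmod y)^2 + (cmod z)^2) - (cmod x - cmod y)^2 - (cmod y - cmod z)^2 - (cmod x - cmod z)^2"
    by (simp add: power2_eq_square algebra_simps)
  moreover have "0 \<le> (cmod x - cmod y)^2" "0 \<le> (cmod y - cmod z)^2" "0 \<le> (cmod x - cmod z)^2" by simp_all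
  ultimately show ?thesis by linarith
qed

lemma pw_upper2: "(cmod (x + y))^2 \<le> 2 * ((cmod x)^2 + (cmod y)^2)"
proof -
  have "cmod (x + y) \<le> cmod x + cmod y" by (rule norm_triangle_ineq)
  hence "(cmod (x + y))^2 \<le> (cmod x + cmod y)^2" by (intro power_mono) auto
  moreover have "(cmod x + cmod y)^2 = 2 * ((cmod x)^2 + (cmod y)^2) - (cmod x - cmod y)^2"
    by (simp add: power2_eq_square algebra_simps)
  moreover have "0 \<le> (cmod x - cmod y)^2" by simp
  ultimately show ?thesis by linarith
qed

lemma pw_delta:
  assumes d: "\<delta> > 0"
  shows "(cmod (x + y))^2 \<le> (1 + \<delta>) * (cmod x)^2 + (1 + 1 / \<delta>) * (cmod y)^2"
proof -
  define a where "a = cmod x"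
  define b where "b = cmod y"
  have "cmod (x + y) \<le> a + b" unfolding a_def b_def by (rule norm_triangle_ineq)
  hence "(cmod (x + y))^2 \<le> (a + b)^2" by (intro power_mono) auto
  moreover have "2 * a * b \<le> \<delta> * a^2 + b^2 / \<delta>"
  proof -
    have "0 \<le> (\<delta> * a - b)^2" by simp
    hence "0 \<le> \<delta>^2 * a^2 - 2 * \<delta> * a * b + b^2" by (simp add: power2_eq_square algebra_simps)
    hence "2 * \<delta> * a * b \<le> \<delta>^2 * a^2 + b^2" by linarith
    hence "(2 * a * b) * \<delta> \<le> (\<delta> * a^2 + b^2 / \<delta>) * \<delta>" using d by (simp add: power2_eq_square algebra_simps)
    thus ?thesis using d by simp
  qed
  moreover have "(a + b)^2 = a^2 + 2 * a * b + b^2" by (simp add: power2_eq_square algebra_simps)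
  moreover have "(1 + \<delta>) * a^2 + (1 + 1 / \<delta>) * b^2 = a^2 + \<delta> * a^2 + b^2 + b^2 / \<delta>" by (simp add: algebra_simps)
  ultimately show ?thesis unfolding a_def[symmetric] b_def[symmetric] by linarith
qed

lemma kfun_integral:
  assumes T: "T > 0" and h: "((\<lambda>t. sin (pi * t / T) * F t) has_integral v) {0..T}"
  shows "((\<lambda>t. kfun T t * F t) has_integral v) {0..}"
proof (rule has_integral_on_superset)
  show "((\<lambda>t. kfun T t * F t) has_integral v) {0..T}"
  proof -
    have "((\<lambda>t. kfun T t * F t) has_integral v) {0..T} = ((\<lambda>t. sin (pi * t / T) * F t) has_integral v) {0..T}"
      by (rule has_integral_cong) (simp add: kfun_def)
    with h show ?thesis by simp
  qed
  show "\<And>x. x \<notin> {0..T} \<Longrightarrow> kfun T x * F x = 0" by (auto simp: kfun_def)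
  show "{0..T} \<subseteq> {0..}" by auto
qed

definition Pw :: "(nat \<Rightarrow> complex) \<Rightarrow> (nat \<Rightarrow> complex) \<Rightarrow> nat \<Rightarrow> nat \<Rightarrow> real \<Rightarrow> complex" where
  "Pw lam c m N t = (\<Sum>n\<in>{m..<N}. c n * exp (\<i> * lam n * of_real t) + cnj (c n) * exp (- \<i> * cnj (lam n) * of_real t))"

definition Rw :: "(nat \<Rightarrow> real) \<Rightarrow> (nat \<Rightarrow> real) \<Rightarrow> nat \<Rightarrow> nat \<Rightarrow> real \<Rightarrow> complex" where
  "Rw r R m N t = (\<Sum>n\<in>{m..<N}. of_real (R n * exp (r n * t)))"

lemma u1_decomp: "u1_part \<omega> \<zeta> r C D R m N t = Pw \<omega> C m N t + Rw r R m N t + Pw \<zeta> D m N t"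
  unfolding u1_part_def Pw_def Rw_def by (simp add: sum.distrib add.assoc)

lemma u2_decomp: "u2_part \<omega> \<zeta> c d C D m N t = Pw \<zeta> (\<lambda>n. d n * D n) m N t + Pw \<omega> (\<lambda>n. c n * C n) m N t"
  unfolding u2_part_def Pw_def by (simp add: sum.distrib add.assoc)

lemma cont_Pw: "continuous_on S (Pw lam c m N)"
  unfolding Pw_def by (intro continuous_intros)

lemma cont_Rw: "continuous_on S (Rw r R m N)"
  unfolding Rw_def by (intro continuous_intros)

lemma u1_split: "m \<le> M \<Longrightarrow> M \<le> N \<Longrightarrow> u1_part \<omega> \<zeta> r C D R m N t = u1_part \<omega> \<zeta> r C D R m M t + u1_part \<omega> \<zeta> r C D R M N t"
  unfolding u1_part_def by (simp add: sum.atLeastLessThan_concat)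

lemma u2_split: "m \<le> M \<Longrightarrow> M \<le> N \<Longrightarrow> u2_part \<omega> \<zeta> c d C D m N t = u2_part \<omega> \<zeta> c d C D m M t + u2_part \<omega> \<zeta> c d C D M N t"
  unfolding u2_part_def by (simp add: sum.atLeastLessThan_concat)

lemma Rpart:
  assumes T: "T > 0" and s0: "s0 > 0" and r: "\<And>n. n \<in> {m..<N} \<Longrightarrow> r n \<le> - s0"
  shows "integral {0..T} (\<lambda>t. sin (pi * t / T) * (cmod (Rw r R m N t))^2) \<le> (\<Sum>n\<in>{m..<N}. \<bar>R n\<bar>)^2 * Kr T s0"
proof -
  have i1: "((\<lambda>t. sin (pi * t / T) * (cmod (Rw r R m N t))^2) has_integral integral {0..T} (\<lambda>t. sin (pi * t / T) * (cmod (Rw r R m N t))^2)) {0..T}"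
    using T by (intro integrable_integral integrable_continuous_interval continuous_intros cont_Rw) auto
  have i2: "((\<lambda>t. (\<Sum>n\<in>{m..<N}. \<bar>R n\<bar>)^2 * (sin (pi * t / T) * exp (-2 * s0 * t))) has_integral (\<Sum>n\<in>{m..<N}. \<bar>R n\<bar>)^2 * Kr T s0) {0..T}"
    by (intro has_integral_mult_right Kr_exp_integral T)
  show ?thesis
  proof (rule has_integral_le[OF i1 i2])
    fix t assume t: "t \<in> {0..T}"
    have sn: "sin (pi * t / T) \<ge> 0" using t T by (intro sin_ge_zero) (auto simp: field_simps)
    have "cmod (Rw r R m N t) \<le> (\<Sum>n\<in>{m..<N}. cmod (of_real (R n * exp (r n * t))))"
      unfolding Rw_def by (rule norm_sum)
    also have "\<dots> \<le> (\<Sum>n\<in>{m..<N}. \<bar>R n\<bar> * exp (- s0 * t))"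
    proof (rule sum_mono)
      fix n assume n: "n \<in> {m..<N}"
      have "r n * t \<le> - s0 * t" using r[OF n] t by (intro mult_right_mono) auto
      hence "exp (r n * t) \<le> exp (- s0 * t)" by simp
      hence "\<bar>R n\<bar> * exp (r n * t) \<le> \<bar>R n\<bar> * exp (- s0 * t)" by (intro mult_left_mono) auto
      moreover have "cmod (of_real (R n * exp (r n * t))) = \<bar>R n\<bar> * exp (r n * t)"
        by (simp only: norm_of_real abs_mult) simp
      ultimately show "cmod (of_real (R n * exp (r n * t))) \<le> \<bar>R n\<bar> * exp (- s0 * t)" by simp
    qed
    also have "\<dots> = (\<Sum>n\<in>{m..<N}. \<bar>R n\<bar>) * exp (- s0 * t)" by (simp add: sum_distrib_right)
    finally have c1: "cmod (Rw r R m N t) \<le> (\<Sum>n\<in>{m..<N}. \<bar>R n\<bar>) * exp (- s0 * t)" .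
    hence "(cmod (Rw r R m N t))^2 \<le> ((\<Sum>n\<in>{m..<N}. \<bar>R n\<bar>) * exp (- s0 * t))^2"
      by (intro power_mono) auto
    also have "\<dots> = (\<Sum>n\<in>{m..<N}. \<bar>R n\<bar>)^2 * exp (-2 * s0 * t)"
      by (simp add: power_mult_distrib power2_eq_square exp_add[symmetric] algebra_simps)
    finally have "(cmod (Rw r R m N t))^2 \<le> (\<Sum>n\<in>{m..<N}. \<bar>R n\<bar>)^2 * exp (-2 * s0 * t)" .
    from mult_left_mono[OF this sn]
    show "sin (pi * t / T) * (cmod (Rw r R m N t))^2 \<le> (\<Sum>n\<in>{m..<N}. \<bar>R n\<bar>)^2 * (sin (pi * t / T) * exp (-2 * s0 * t))"
      by (simp add: algebra_simps)
  qed
qed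

lemma R_CS:
  assumes R: "\<And>n. n \<in> A \<Longrightarrow> \<bar>R n\<bar> \<le> \<mu> * z n * sqrt (q n)" and mu: "\<mu> \<ge> 0"
    and z: "\<And>n. z n \<ge> 0" and q: "\<And>n. q n \<ge> 0"
  shows "(\<Sum>n\<in>A. \<bar>R n\<bar>)^2 \<le> \<mu>^2 * (\<Sum>n\<in>A. (z n)^2) * (\<Sum>n\<in>A. q n)"
proof -
  have "(\<Sum>n\<in>A. \<bar>R n\<bar>) \<le> (\<Sum>n\<in>A. \<mu> * (z n * sqrt (q n)))"
    using R by (intro sum_mono) (simp add: mult.assoc)
  also have "\<dots> = \<mu> * (\<Sum>n\<in>A. z n * sqrt (q n))" by (simp add: sum_distrib_left)
  finally have "(\<Sum>n\<in>A. \<bar>R n\<bar>)^2 \<le> (\<mu> * (\<Sum>n\<in>A. z n * sqrt (q n)))^2"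
    by (intro power_mono) (auto intro: sum_nonneg)
  also have "\<dots> = \<mu>^2 * (\<Sum>n\<in>A. z n * sqrt (q n))^2" by (simp add: power_mult_distrib)
  also have "\<dots> \<le> \<mu>^2 * ((\<Sum>n\<in>A. (z n)^2) * (\<Sum>n\<in>A. (sqrt (q n))^2))"
    by (intro mult_left_mono Cauchy_Schwarz_ineq_sum) simp
  also have "(\<Sum>n\<in>A. (sqrt (q n))^2) = (\<Sum>n\<in>A. q n)" using q by simp
  finally show ?thesis by (simp add: mult.assoc)
qed

lemma fam_Pw:
  fixes c lam :: "nat \<Rightarrow> complex"
  assumes T: "T > 0" and g: "g > 0" and eta: "0 < \<eta>" "\<eta> \<le> 1" and Y0: "Y \<ge> 0"
    and step: "\<And>n. n \<ge> m \<Longrightarrow> Re (lam (Suc n)) - Re (lam n) \<ge> g"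
    and start: "Re (lam m) \<ge> g / 2"
    and Yb: "\<And>n. n \<ge> m \<Longrightarrow> \<bar>Im (lam n)\<bar> \<le> Y"
    and A: "4 * ((pi/T)^2 + 4 * Y^2) \<le> (1 - \<eta>) * g^2"
  obtains Q where "((\<lambda>t. sin (pi * t / T) * (cmod (Pw lam c m N t))^2) has_integral Q) {0..T}"
      "2 * \<eta> * (\<Sum>n\<in>{m..<N}. (cmod (c n))^2 * Kr T (Im (lam n))) \<le> Q"
      "Q \<le> 4 * (\<Sum>n\<in>{m..<N}. (cmod (c n))^2 * Kr T (Im (lam n)))"
  using fam[OF T g eta Y0 step start Yb A, where c=c and N=N] unfolding Pw_def by blast

lemma distr_aux: "(K::real) * (u * (x + y)) = x * (K * u) + y * (K * u)"
  by (simp add: algebra_simps)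

lemma block:
  fixes \<omega> \<zeta> c d C D :: "nat \<Rightarrow> complex" and r R z :: "nat \<Rightarrow> real"
  assumes T: "T > 0" and g: "g > 0" and eta: "0 < \<eta>" "\<eta> \<le> 1" and Y0: "Y \<ge> 0"
    and A: "4 * ((pi/T)^2 + 4 * Y^2) \<le> (1 - \<eta>) * g^2"
    and s0: "s0 > 0"
    and stepw: "\<And>n. n \<ge> m \<Longrightarrow> Re (\<omega> (Suc n)) - Re (\<omega> n) \<ge> g" and startw: "Re (\<omega> m) \<ge> g / 2"
    and stepz: "\<And>n. n \<ge> m \<Longrightarrow> Re (\<zeta> (Suc n)) - Re (\<zeta> n) \<ge> g" and startz: "Re (\<zeta> m) \<ge> g / 2"
    and Yw: "\<And>n. n \<ge> m \<Longrightarrow> \<bar>Im (\<omega> n)\<bar> \<le> Y" and Imw: "\<And>n. n \<ge> m \<Longrightarrow> Im (\<omega> n) \<ge> 0"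
    and Yz: "\<And>n. n \<ge> m \<Longrightarrow> \<bar>Im (\<zeta> n)\<bar> \<le> Y"
    and rb: "\<And>n. n \<ge> m \<Longrightarrow> r n \<le> - s0"
    and cb: "\<And>n. n \<ge> m \<Longrightarrow> (cmod (c n))^2 \<le> \<eta> / 16"
    and db: "\<And>n. n \<ge> m \<Longrightarrow> (cmod (D n))^2 \<le> \<eta> / 32 * (cmod (d n * D n))^2"
    and Rb: "\<And>n. n \<ge> m \<Longrightarrow> \<bar>R n\<bar> \<le> \<mu> * z n * sqrt ((cmod (C n))^2 + (cmod (d n * D n))^2)"
    and mu: "\<mu> \<ge> 0" and z0: "\<And>n. z n \<ge> 0"
    and Zb: "\<mu>^2 * (\<Sum>n\<in>{m..<N}. (z n)^2) * (2 * (1 + Y^2 / s0^2)) \<le> \<eta> / 8"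
  shows "(\<lambda>t. sin (pi * t / T) * ((cmod (u1_part \<omega> \<zeta> r C D R m N t))^2 + (cmod (u2_part \<omega> \<zeta> c d C D m N t))^2)) integrable_on {0..T}"
    and "\<eta> / 2 * ((pi/T) / (2 * ((pi/T)^2 + 4 * Y^2))) * (\<Sum>n\<in>{m..<N}. (1 + exp (-2 * Im (\<omega> n) * T)) * ((cmod (C n))^2 + (cmod (d n * D n))^2))
         \<le> integral {0..T} (\<lambda>t. sin (pi * t / T) * ((cmod (u1_part \<omega> \<zeta> r C D R m N t))^2 + (cmod (u2_part \<omega> \<zeta> c d C D m N t))^2))"
    and "integral {0..T} (\<lambda>t. sin (pi * t / T) * ((cmod (u1_part \<omega> \<zeta> r C D R m N t))^2 + (cmod (u2_part \<omega> \<zeta> c d C D m N t))^2))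
         \<le> 30 * ((pi/T) * (1 + exp (2 * Y * T)) / (pi/T)^2) * (\<Sum>n\<in>{m..<N}. (cmod (C n))^2 + (cmod (d n * D n))^2)"
proof -
  define b where "b = pi / T"
  have bpos: "b > 0" using T by (simp add: b_def)
  define Kb where "Kb = (pi/T) * (1 + exp (2 * Y * T)) / (pi/T)^2"
  define k where "k n = Kr T (Im (\<omega> n))" for n
  define th where "th n = Kr T (Im (\<zeta> n))" for n
  define a where "a n = (cmod (C n))^2" for n
  define e where "e n = (cmod (d n * D n))^2" for n
  define SP where "SP = (\<Sum>n\<in>{m..<N}. (cmod (C n))^2 * k n)"
  define SQ where "SQ = (\<Sum>n\<in>{m..<N}. (cmod (D n))^2 * th n)"
  define SU where "SU = (\<Sum>n\<in>{m..<N}. (cmod (d n * D n))^2 * th n)"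
  define SV where "SV = (\<Sum>n\<in>{m..<N}. (cmod (c n * C n))^2 * k n)"
  have kpos: "k n > 0" "th n > 0" for n using Kr_pos[OF T] by (auto simp: k_def th_def)
  have k0: "k n \<ge> 0" "th n \<ge> 0" for n using kpos[of n] by auto
  obtain QP where QP: "((\<lambda>t. sin (pi * t / T) * (cmod (Pw \<omega> C m N t))^2) has_integral QP) {0..T}" "2 * \<eta> * SP \<le> QP" "QP \<le> 4 * SP"
    using fam_Pw[OF T g eta Y0 stepw startw Yw A, where N=N and c=C] unfolding SP_def k_def by blast
  obtain QQ where QQ: "((\<lambda>t. sin (pi * t / T) * (cmod (Pw \<zeta> D m N t))^2) has_integral QQ) {0..T}" "QQ \<le> 4 * SQ"
    using fam_Pw[OF T g eta Y0 stepz startz Yz A, where N=N and c=D] unfolding SQ_def th_def by blast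
  obtain QU where QU: "((\<lambda>t. sin (pi * t / T) * (cmod (Pw \<zeta> (\<lambda>n. d n * D n) m N t))^2) has_integral QU) {0..T}" "2 * \<eta> * SU \<le> QU" "QU \<le> 4 * SU"
    using fam_Pw[OF T g eta Y0 stepz startz Yz A, where N=N and c="\<lambda>n. d n * D n"] unfolding SU_def th_def by blast
  obtain QV where QV: "((\<lambda>t. sin (pi * t / T) * (cmod (Pw \<omega> (\<lambda>n. c n * C n) m N t))^2) has_integral QV) {0..T}" "QV \<le> 4 * SV"
    using fam_Pw[OF T g eta Y0 stepw startw Yw A, where N=N and c="\<lambda>n. c n * C n"] unfolding SV_def k_def by blast
  define J where "J = integral {0..T} (\<lambda>t. sin (pi * t / T) * (cmod (Rw r R m N t))^2)"
  have QJ: "((\<lambda>t. sin (pi * t / T) * (cmod (Rw r R m N t))^2) has_integral J) {0..T}"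
    unfolding J_def using T by (intro integrable_integral integrable_continuous_interval continuous_intros cont_Rw) auto
  have J0: "J \<ge> 0"
    unfolding J_def
  proof (rule integral_nonneg)
    show "(\<lambda>t. sin (pi * t / T) * (cmod (Rw r R m N t))^2) integrable_on {0..T}" using QJ by blast
    fix t assume t: "t \<in> {0..T}"
    have "sin (pi * t / T) \<ge> 0" using t T by (intro sin_ge_zero) (auto simp: field_simps)
    thus "0 \<le> sin (pi * t / T) * (cmod (Rw r R m N t))^2" by simp
  qed
  have SQb: "SQ \<le> \<eta> / 32 * SU"
    unfolding SQ_def SU_def sum_distrib_left
    by (rule sum_mono) (use db kpos in \<open>auto intro!: mult_right_mono simp: mult.assoc[symmetric]\<close>)
  have SVb: "SV \<le> \<eta> / 16 * SP"
    unfolding SV_def SP_def sum_distrib_left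
  proof (rule sum_mono)
    fix n assume n: "n \<in> {m..<N}"
    have "(cmod (c n * C n))^2 = (cmod (c n))^2 * (cmod (C n))^2" by (simp add: norm_mult power_mult_distrib)
    also have "\<dots> \<le> \<eta> / 16 * (cmod (C n))^2" using cb[of n] n by (intro mult_right_mono) auto
    finally show "(cmod (c n * C n))^2 * k n \<le> \<eta> / 16 * ((cmod (C n))^2 * k n)"
      using kpos[of n] by (simp add: mult_right_mono mult.assoc[symmetric])
  qed
  have Jb: "J \<le> \<eta> / 8 * (SP + SU)"
  proof -
    have "J \<le> (\<Sum>n\<in>{m..<N}. \<bar>R n\<bar>)^2 * Kr T s0"
      unfolding J_def by (rule Rpart[OF T s0]) (use rb in auto)
    also have "\<dots> \<le> (\<mu>^2 * (\<Sum>n\<in>{m..<N}. (z n)^2) * (\<Sum>n\<in>{m..<N}. a n + e n)) * Kr T s0"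
      apply (rule mult_right_mono)
      apply (rule R_CS[where z=z and \<mu>=\<mu>])
      using Rb mu z0 Kr_pos[OF T, of s0] by (auto simp: a_def e_def)
    also have "(\<Sum>n\<in>{m..<N}. a n + e n) * Kr T s0 \<le> 2 * (1 + Y^2 / s0^2) * (SP + SU)"
    proof -
      have "(\<Sum>n\<in>{m..<N}. a n + e n) * Kr T s0 = (\<Sum>n\<in>{m..<N}. a n * Kr T s0 + e n * Kr T s0)"
        by (simp add: sum_distrib_right distrib_right)
      also have "\<dots> \<le> (\<Sum>n\<in>{m..<N}. a n * (2 * (1 + Y^2 / s0^2) * k n) + e n * (2 * (1 + Y^2 / s0^2) * th n))"
      proof (rule sum_mono)
        fix n assume n: "n \<in> {m..<N}"
        have "Kr T s0 \<le> 2 * (1 + Y^2 / s0^2) * k n" unfolding k_def using Kr_ratio[OF T s0 Yw[of n]] n by auto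
        moreover have "Kr T s0 \<le> 2 * (1 + Y^2 / s0^2) * th n" unfolding th_def using Kr_ratio[OF T s0 Yz[of n]] n by auto
        moreover have "a n \<ge> 0" "e n \<ge> 0" by (auto simp: a_def e_def)
        ultimately show "a n * Kr T s0 + e n * Kr T s0 \<le> a n * (2 * (1 + Y^2 / s0^2) * k n) + e n * (2 * (1 + Y^2 / s0^2) * th n)"
          by (intro add_mono mult_left_mono) auto
      qed
      also have "\<dots> = (\<Sum>n\<in>{m..<N}. 2 * (1 + Y^2 / s0^2) * (a n * k n + e n * th n))"
        by (intro sum.cong refl) (simp add: algebra_simps add_divide_distrib)
      also have "\<dots> = 2 * (1 + Y^2 / s0^2) * (SP + SU)"
        by (simp only: SP_def SU_def a_def e_def sum_distrib_left[symmetric] sum.distrib)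
      finally show ?thesis .
    qed
    hence "(\<mu>^2 * (\<Sum>n\<in>{m..<N}. (z n)^2) * (\<Sum>n\<in>{m..<N}. a n + e n)) * Kr T s0 \<le> (\<mu>^2 * (\<Sum>n\<in>{m..<N}. (z n)^2)) * (2 * (1 + Y^2 / s0^2) * (SP + SU))"
      by (simp only: mult.assoc) (intro mult_left_mono, auto intro!: sum_nonneg)
    also have "\<dots> = (\<mu>^2 * (\<Sum>n\<in>{m..<N}. (z n)^2) * (2 * (1 + Y^2 / s0^2))) * (SP + SU)" by (simp add: algebra_simps)
    also have "\<dots> \<le> \<eta> / 8 * (SP + SU)"
      using Zb k0 by (intro mult_right_mono) (auto simp: SP_def SU_def intro!: add_nonneg_nonneg sum_nonneg mult_nonneg_nonneg)
    finally show ?thesis .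
  qed
  have SP0: "SP \<ge> 0" "SU \<ge> 0" "SQ \<ge> 0" "SV \<ge> 0" using k0 by (auto simp: SP_def SU_def SQ_def SV_def intro!: sum_nonneg)
  have u1e: "u1_part \<omega> \<zeta> r C D R m N t = Pw \<omega> C m N t + Rw r R m N t + Pw \<zeta> D m N t" for t by (rule u1_decomp)
  have u2e: "u2_part \<omega> \<zeta> c d C D m N t = Pw \<zeta> (\<lambda>n. d n * D n) m N t + Pw \<omega> (\<lambda>n. c n * C n) m N t" for t by (rule u2_decomp)
  define F where "F = (\<lambda>t. sin (pi * t / T) * ((cmod (u1_part \<omega> \<zeta> r C D R m N t))^2 + (cmod (u2_part \<omega> \<zeta> c d C D m N t))^2))"
  have Fint: "F integrable_on {0..T}"
    unfolding F_def u1e u2e using T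
    by (intro integrable_continuous_interval continuous_intros cont_Pw cont_Rw) auto
  have FI: "(F has_integral integral {0..T} F) {0..T}" using Fint by (rule integrable_integral)
  have sinpos: "sin (pi * t / T) \<ge> 0" if "t \<in> {0..T}" for t using that T by (intro sin_ge_zero) (auto simp: field_simps)
  have low_int: "((\<lambda>t. 1/2 * (sin (pi * t / T) * (cmod (Pw \<omega> C m N t))^2) - 2 * (sin (pi * t / T) * (cmod (Rw r R m N t))^2)
        - 2 * (sin (pi * t / T) * (cmod (Pw \<zeta> D m N t))^2) + 1/2 * (sin (pi * t / T) * (cmod (Pw \<zeta> (\<lambda>n. d n * D n) m N t))^2)
        - (sin (pi * t / T) * (cmod (Pw \<omega> (\<lambda>n. c n * C n) m N t))^2)) has_integral
        (1/2 * QP - 2 * J - 2 * QQ + 1/2 * QU - QV)) {0..T}"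
    by (intro has_integral_diff has_integral_add has_integral_mult_right QP(1) QJ QQ(1) QU(1) QV(1))
  have lowF: "1/2 * QP - 2 * J - 2 * QQ + 1/2 * QU - QV \<le> integral {0..T} F"
  proof (rule has_integral_le[OF low_int FI])
    fix t assume t: "t \<in> {0..T}"
    have l1: "(cmod (Pw \<omega> C m N t))^2 / 2 - 2 * (cmod (Rw r R m N t))^2 - 2 * (cmod (Pw \<zeta> D m N t))^2 \<le> (cmod (u1_part \<omega> \<zeta> r C D R m N t))^2"
      unfolding u1e by (rule pw_lower3)
    have l2: "(cmod (Pw \<zeta> (\<lambda>n. d n * D n) m N t))^2 / 2 - (cmod (Pw \<omega> (\<lambda>n. c n * C n) m N t))^2 \<le> (cmod (u2_part \<omega> \<zeta> c d C D m N t))^2"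
      unfolding u2e by (rule pw_lower2)
    have "sin (pi * t / T) * ((cmod (Pw \<omega> C m N t))^2 / 2 - 2 * (cmod (Rw r R m N t))^2 - 2 * (cmod (Pw \<zeta> D m N t))^2
         + ((cmod (Pw \<zeta> (\<lambda>n. d n * D n) m N t))^2 / 2 - (cmod (Pw \<omega> (\<lambda>n. c n * C n) m N t))^2))
         \<le> sin (pi * t / T) * ((cmod (u1_part \<omega> \<zeta> r C D R m N t))^2 + (cmod (u2_part \<omega> \<zeta> c d C D m N t))^2)"
      using l1 l2 sinpos[OF t] by (intro mult_left_mono add_mono) auto
    thus "1/2 * (sin (pi * t / T) * (cmod (Pw \<omega> C m N t))^2) - 2 * (sin (pi * t / T) * (cmod (Rw r R m N t))^2)
        - 2 * (sin (pi * t / T) * (cmod (Pw \<zeta> D m N t))^2) + 1/2 * (sin (pi * t / T) * (cmod (Pw \<zeta> (\<lambda>n. d n * D n) m N t))^2)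
        - (sin (pi * t / T) * (cmod (Pw \<omega> (\<lambda>n. c n * C n) m N t))^2) \<le> F t"
      unfolding F_def by (simp add: algebra_simps)
  qed
  have up_int: "((\<lambda>t. 3 * (sin (pi * t / T) * (cmod (Pw \<omega> C m N t))^2) + 3 * (sin (pi * t / T) * (cmod (Rw r R m N t))^2)
        + 3 * (sin (pi * t / T) * (cmod (Pw \<zeta> D m N t))^2) + 2 * (sin (pi * t / T) * (cmod (Pw \<zeta> (\<lambda>n. d n * D n) m N t))^2)
        + 2 * (sin (pi * t / T) * (cmod (Pw \<omega> (\<lambda>n. c n * C n) m N t))^2)) has_integral
        (3 * QP + 3 * J + 3 * QQ + 2 * QU + 2 * QV)) {0..T}"
    by (intro has_integral_diff has_integral_add has_integral_mult_right QP(1) QJ QQ(1) QU(1) QV(1))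
  have upF: "integral {0..T} F \<le> 3 * QP + 3 * J + 3 * QQ + 2 * QU + 2 * QV"
  proof (rule has_integral_le[OF FI up_int])
    fix t assume t: "t \<in> {0..T}"
    have l1: "(cmod (u1_part \<omega> \<zeta> r C D R m N t))^2 \<le> 3 * ((cmod (Pw \<omega> C m N t))^2 + (cmod (Rw r R m N t))^2 + (cmod (Pw \<zeta> D m N t))^2)"
      unfolding u1e by (rule pw_upper3)
    have l2: "(cmod (u2_part \<omega> \<zeta> c d C D m N t))^2 \<le> 2 * ((cmod (Pw \<zeta> (\<lambda>n. d n * D n) m N t))^2 + (cmod (Pw \<omega> (\<lambda>n. c n * C n) m N t))^2)"
      unfolding u2e by (rule pw_upper2)
    have "sin (pi * t / T) * ((cmod (u1_part \<omega> \<zeta> r C D R m N t))^2 + (cmod (u2_part \<omega> \<zeta> c d C D m N t))^2)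
        \<le> sin (pi * t / T) * (3 * ((cmod (Pw \<omega> C m N t))^2 + (cmod (Rw r R m N t))^2 + (cmod (Pw \<zeta> D m N t))^2)
            + 2 * ((cmod (Pw \<zeta> (\<lambda>n. d n * D n) m N t))^2 + (cmod (Pw \<omega> (\<lambda>n. c n * C n) m N t))^2))"
      using l1 l2 sinpos[OF t] by (intro mult_left_mono add_mono) auto
    thus "F t \<le> 3 * (sin (pi * t / T) * (cmod (Pw \<omega> C m N t))^2) + 3 * (sin (pi * t / T) * (cmod (Rw r R m N t))^2)
        + 3 * (sin (pi * t / T) * (cmod (Pw \<zeta> D m N t))^2) + 2 * (sin (pi * t / T) * (cmod (Pw \<zeta> (\<lambda>n. d n * D n) m N t))^2)
        + 2 * (sin (pi * t / T) * (cmod (Pw \<omega> (\<lambda>n. c n * C n) m N t))^2)"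
      unfolding F_def by (simp add: algebra_simps)
  qed
  show "F integrable_on {0..T}" unfolding F_def[symmetric] by (rule Fint)
  have half: "\<eta> / 2 * (SP + SU) \<le> integral {0..T} F"
  proof -
    have "\<eta> / 2 * (SP + SU) \<le> 1/2 * QP - 2 * J - 2 * QQ + 1/2 * QU - QV"
    proof -
      have f1: "2 * (\<eta> * SP) \<le> QP" using QP(2) by (simp add: algebra_simps)
      have f2: "2 * (\<eta> * SU) \<le> QU" using QU(2) by (simp add: algebra_simps)
      have f3: "J \<le> (\<eta> * SP) / 8 + (\<eta> * SU) / 8" using Jb by (simp add: algebra_simps)
      have f4: "SQ \<le> (\<eta> * SU) / 32" using SQb by (simp add: algebra_simps)
      have f5: "SV \<le> (\<eta> * SP) / 16" using SVb by (simp add: algebra_simps)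
      have f6: "\<eta> / 2 * (SP + SU) = (\<eta> * SP) / 2 + (\<eta> * SU) / 2" by (simp add: algebra_simps)
      show ?thesis using f1 f2 f3 f4 f5 f6 QQ(2) QV(2) by linarith
    qed
    thus ?thesis using lowF by linarith
  qed
  have termlow: "(\<Sum>n\<in>{m..<N}. b / (2 * (b^2 + 4 * Y^2)) * ((1 + exp (-2 * Im (\<omega> n) * T)) * ((cmod (C n))^2 + (cmod (d n * D n))^2))) \<le> SP + SU"
    unfolding SP_def SU_def sum.distrib[symmetric]
  proof (rule sum_mono)
    fix n assume n: "n \<in> {m..<N}"
    have den: "b^2 + 4 * Y^2 > 0" using bpos by (simp add: add_pos_nonneg)
    have ew: "exp (-2 * Im (\<omega> n) * T) \<le> 1" using Imw[of n] n T by simp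
    have k1: "b * (1 + exp (-2 * Im (\<omega> n) * T)) / (b^2 + 4 * Y^2) \<le> k n"
      unfolding k_def b_def using Kr_lower[OF T Yw[of n]] n by simp
    have k2: "b * (1 + exp (-2 * Im (\<zeta> n) * T)) / (b^2 + 4 * Y^2) \<le> th n"
      unfolding th_def b_def using Kr_lower[OF T Yz[of n]] n by simp
    have "b / (2 * (b^2 + 4 * Y^2)) * (1 + exp (-2 * Im (\<omega> n) * T)) \<le> b * (1 + exp (-2 * Im (\<omega> n) * T)) / (b^2 + 4 * Y^2)"
      using den bpos by (simp add: field_simps)
    hence c1: "b / (2 * (b^2 + 4 * Y^2)) * (1 + exp (-2 * Im (\<omega> n) * T)) \<le> k n" using k1 by linarith
    have "b / (2 * (b^2 + 4 * Y^2)) * (1 + exp (-2 * Im (\<omega> n) * T)) \<le> b / (2 * (b^2 + 4 * Y^2)) * 2"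
      using den bpos ew by (intro mult_left_mono) auto
    also have "\<dots> = b / (b^2 + 4 * Y^2)" using den by (simp add: field_simps)
    finally have "b / (2 * (b^2 + 4 * Y^2)) * (1 + exp (-2 * Im (\<omega> n) * T)) \<le> b / (b^2 + 4 * Y^2)" .
    also have "\<dots> \<le> b * (1 + exp (-2 * Im (\<zeta> n) * T)) / (b^2 + 4 * Y^2)"
      using den bpos by (simp add: field_simps)
    finally have c2: "b / (2 * (b^2 + 4 * Y^2)) * (1 + exp (-2 * Im (\<omega> n) * T)) \<le> th n" using k2 by linarith
    have "b / (2 * (b^2 + 4 * Y^2)) * ((1 + exp (-2 * Im (\<omega> n) * T)) * ((cmod (C n))^2 + (cmod (d n * D n))^2))
        = (cmod (C n))^2 * (b / (2 * (b^2 + 4 * Y^2)) * (1 + exp (-2 * Im (\<omega> n) * T)))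
          + (cmod (d n * D n))^2 * (b / (2 * (b^2 + 4 * Y^2)) * (1 + exp (-2 * Im (\<omega> n) * T)))"
      by (rule distr_aux)
    also have "\<dots> \<le> (cmod (C n))^2 * k n + (cmod (d n * D n))^2 * th n"
      using c1 c2 by (intro add_mono mult_left_mono) auto
    finally show "b / (2 * (b^2 + 4 * Y^2)) * ((1 + exp (-2 * Im (\<omega> n) * T)) * ((cmod (C n))^2 + (cmod (d n * D n))^2))
        \<le> (cmod (C n))^2 * k n + (cmod (d n * D n))^2 * th n" .
  qed
  show "\<eta> / 2 * ((pi/T) / (2 * ((pi/T)^2 + 4 * Y^2))) * (\<Sum>n\<in>{m..<N}. (1 + exp (-2 * Im (\<omega> n) * T)) * ((cmod (C n))^2 + (cmod (d n * D n))^2))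
         \<le> integral {0..T} F"
  proof -
    have "\<eta> / 2 * ((pi/T) / (2 * ((pi/T)^2 + 4 * Y^2))) * (\<Sum>n\<in>{m..<N}. (1 + exp (-2 * Im (\<omega> n) * T)) * ((cmod (C n))^2 + (cmod (d n * D n))^2))
        = \<eta> / 2 * (\<Sum>n\<in>{m..<N}. b / (2 * (b^2 + 4 * Y^2)) * ((1 + exp (-2 * Im (\<omega> n) * T)) * ((cmod (C n))^2 + (cmod (d n * D n))^2)))"
      by (simp only: b_def sum_distrib_left mult.assoc)
    also have "\<dots> \<le> \<eta> / 2 * (SP + SU)" using termlow eta by (intro mult_left_mono) auto
    finally show ?thesis using half by linarith
  qed
  have SPb: "SP \<le> Kb * (\<Sum>n\<in>{m..<N}. a n)" and SUb: "SU \<le> Kb * (\<Sum>n\<in>{m..<N}. e n)"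
  proof -
    show "SP \<le> Kb * (\<Sum>n\<in>{m..<N}. a n)"
      unfolding SP_def sum_distrib_left
    proof (rule sum_mono)
      fix n assume n: "n \<in> {m..<N}"
      have "k n \<le> Kb" using Kr_upper[OF T Yw[of n]] n by (simp add: k_def Kb_def)
      from mult_left_mono[OF this, of "(cmod (C n))^2"]
      show "(cmod (C n))^2 * k n \<le> Kb * a n" by (simp add: a_def mult.commute)
    qed
    show "SU \<le> Kb * (\<Sum>n\<in>{m..<N}. e n)"
      unfolding SU_def sum_distrib_left
    proof (rule sum_mono)
      fix n assume n: "n \<in> {m..<N}"
      have "th n \<le> Kb" using Kr_upper[OF T Yz[of n]] n by (simp add: th_def Kb_def)
      from mult_left_mono[OF this, of "(cmod (d n * D n))^2"]
      show "(cmod (d n * D n))^2 * th n \<le> Kb * e n" by (simp add: e_def mult.commute)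
    qed
  qed
  show "integral {0..T} F \<le> 30 * ((pi/T) * (1 + exp (2 * Y * T)) / (pi/T)^2) * (\<Sum>n\<in>{m..<N}. (cmod (C n))^2 + (cmod (d n * D n))^2)"
  proof -
    have "integral {0..T} F \<le> 23 * SP + 23 * SU"
    proof -
      have f3: "J \<le> (\<eta> * SP) / 8 + (\<eta> * SU) / 8" using Jb by (simp add: algebra_simps)
      have f4: "SQ \<le> (\<eta> * SU) / 32" using SQb by (simp add: algebra_simps)
      have f5: "SV \<le> (\<eta> * SP) / 16" using SVb by (simp add: algebra_simps)
      have f7: "\<eta> * SP \<le> SP" "\<eta> * SU \<le> SU" using eta SP0 by (simp_all add: mult_left_le_one_le)
      define p where "p = \<eta> * SP"
      define u where "u = \<eta> * SU"
      have g3: "J \<le> p / 8 + u / 8" using f3 by (simp add: p_def u_def)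
      have g4: "SQ \<le> u / 32" using f4 by (simp add: u_def)
      have g5: "SV \<le> p / 16" using f5 by (simp add: p_def)
      have g7: "p \<le> SP" "u \<le> SU" using f7 by (simp_all add: p_def u_def)
      show ?thesis using upF QP(3) QU(3) QQ(2) QV(2) g3 g4 g5 g7 SP0 by linarith
    qed
    also have "\<dots> \<le> 23 * (Kb * (\<Sum>n\<in>{m..<N}. a n + e n))"
    proof -
      have "Kb * (\<Sum>n\<in>{m..<N}. a n + e n) = Kb * (\<Sum>n\<in>{m..<N}. a n) + Kb * (\<Sum>n\<in>{m..<N}. e n)"
        by (simp add: sum.distrib distrib_left)
      thus ?thesis using SPb SUb by linarith
    qed
    also have "\<dots> \<le> 30 * (Kb * (\<Sum>n\<in>{m..<N}. a n + e n))"
    proof -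
      have "Kb \<ge> 0" using T by (simp add: Kb_def add_nonneg_nonneg)
      moreover have "(\<Sum>n\<in>{m..<N}. a n + e n) \<ge> 0" by (auto simp: a_def e_def intro!: sum_nonneg)
      ultimately show ?thesis by (simp add: mult_right_mono)
    qed
    finally show ?thesis by (simp add: Kb_def a_def e_def mult.assoc)
  qed
qed

lemma eventually_big:
  fixes f :: "nat \<Rightarrow> real"
  assumes step: "\<And>n. n \<ge> N1 \<Longrightarrow> f (Suc n) - f n \<ge> g" and g: "g > 0"
  shows "eventually (\<lambda>n. f n \<ge> B) sequentially"
proof -
  define K where "K = N1 + nat \<lceil>(B - f N1) / g\<rceil>"
  show ?thesis unfolding eventually_sequentially
  proof (intro exI allI impI)
    fix n assume n: "n \<ge> K"
    hence n1: "N1 \<le> n" by (simp add: K_def)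
    have "f n - f N1 \<ge> g * (real n - real N1)"
      using mono_gap[where f=f and m=N1 and g=g, OF step order_refl n1] by simp
    moreover have "real n - real N1 \<ge> (B - f N1) / g"
    proof -
      have "real n \<ge> real N1 + real (nat \<lceil>(B - f N1) / g\<rceil>)" using n by (simp add: K_def)
      moreover have "real (nat \<lceil>(B - f N1) / g\<rceil>) \<ge> (B - f N1) / g" by linarith
      ultimately show ?thesis by linarith
    qed
    hence "g * (real n - real N1) \<ge> g * ((B - f N1) / g)" using g by (intro mult_left_mono) auto
    hence "g * (real n - real N1) \<ge> B - f N1" using g by simp
    ultimately show "f n \<ge> B" by linarith
  qed
qed

lemma cont_u1: "continuous_on S (u1_part \<omega> \<zeta> r C D R m N)"
proof -
  have "u1_part \<omega> \<zeta> r C D R m N = (\<lambda>t. Pw \<omega> C m N t + Rw r R m N t + Pw \<zeta> D m N t)"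
    using u1_decomp by blast
  thus ?thesis by (simp add: continuous_intros cont_Pw cont_Rw)
qed

lemma cont_u2: "continuous_on S (u2_part \<omega> \<zeta> c d C D m N)"
proof -
  have "u2_part \<omega> \<zeta> c d C D m N = (\<lambda>t. Pw \<zeta> (\<lambda>n. d n * D n) m N t + Pw \<omega> (\<lambda>n. c n * C n) m N t)"
    using u2_decomp by blast
  thus ?thesis by (simp add: continuous_intros cont_Pw)
qed

lemma int_delta:
  fixes f1 f2 g1 g2 :: "real \<Rightarrow> complex"
  assumes T: "T > 0" and d: "\<delta> > 0"
    and c: "continuous_on {0..T} f1" "continuous_on {0..T} f2" "continuous_on {0..T} g1" "continuous_on {0..T} g2"
  shows "integral {0..T} (\<lambda>t. sin (pi * t / T) * ((cmod (f1 t + g1 t))^2 + (cmod (f2 t + g2 t))^2))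
     \<le> (1 + \<delta>) * integral {0..T} (\<lambda>t. sin (pi * t / T) * ((cmod (f1 t))^2 + (cmod (f2 t))^2))
       + (1 + 1 / \<delta>) * integral {0..T} (\<lambda>t. sin (pi * t / T) * ((cmod (g1 t))^2 + (cmod (g2 t))^2))"
proof -
  have i1: "(\<lambda>t. sin (pi * t / T) * ((cmod (f1 t + g1 t))^2 + (cmod (f2 t + g2 t))^2)) integrable_on {0..T}"
    using T c by (intro integrable_continuous_interval continuous_intros) auto
  have i2: "(\<lambda>t. sin (pi * t / T) * ((cmod (f1 t))^2 + (cmod (f2 t))^2)) integrable_on {0..T}"
    using T c by (intro integrable_continuous_interval continuous_intros) auto
  have i3: "(\<lambda>t. sin (pi * t / T) * ((cmod (g1 t))^2 + (cmod (g2 t))^2)) integrable_on {0..T}"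
    using T c by (intro integrable_continuous_interval continuous_intros) auto
  have "integral {0..T} (\<lambda>t. sin (pi * t / T) * ((cmod (f1 t + g1 t))^2 + (cmod (f2 t + g2 t))^2))
      \<le> integral {0..T} (\<lambda>t. (1 + \<delta>) * (sin (pi * t / T) * ((cmod (f1 t))^2 + (cmod (f2 t))^2))
            + (1 + 1 / \<delta>) * (sin (pi * t / T) * ((cmod (g1 t))^2 + (cmod (g2 t))^2)))"
  proof (rule integral_le[OF i1])
    show "(\<lambda>t. (1 + \<delta>) * (sin (pi * t / T) * ((cmod (f1 t))^2 + (cmod (f2 t))^2))
            + (1 + 1 / \<delta>) * (sin (pi * t / T) * ((cmod (g1 t))^2 + (cmod (g2 t))^2))) integrable_on {0..T}"
      using T c by (intro integrable_continuous_interval continuous_intros) auto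
    fix t assume t: "t \<in> {0..T}"
    have sn: "sin (pi * t / T) \<ge> 0" using t T by (intro sin_ge_zero) (auto simp: field_simps)
    have "(cmod (f1 t + g1 t))^2 + (cmod (f2 t + g2 t))^2 \<le>
        ((1 + \<delta>) * (cmod (f1 t))^2 + (1 + 1 / \<delta>) * (cmod (g1 t))^2) + ((1 + \<delta>) * (cmod (f2 t))^2 + (1 + 1 / \<delta>) * (cmod (g2 t))^2)"
      using pw_delta[OF d, of "f1 t" "g1 t"] pw_delta[OF d, of "f2 t" "g2 t"] by linarith
    from mult_left_mono[OF this sn]
    show "sin (pi * t / T) * ((cmod (f1 t + g1 t))^2 + (cmod (f2 t + g2 t))^2)
        \<le> (1 + \<delta>) * (sin (pi * t / T) * ((cmod (f1 t))^2 + (cmod (f2 t))^2))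
            + (1 + 1 / \<delta>) * (sin (pi * t / T) * ((cmod (g1 t))^2 + (cmod (g2 t))^2))"
      by (simp add: algebra_simps)
  qed
  also have "\<dots> = (1 + \<delta>) * integral {0..T} (\<lambda>t. sin (pi * t / T) * ((cmod (f1 t))^2 + (cmod (f2 t))^2))
       + (1 + 1 / \<delta>) * integral {0..T} (\<lambda>t. sin (pi * t / T) * ((cmod (g1 t))^2 + (cmod (g2 t))^2))"
    by (intro integral_unique has_integral_add has_integral_mult_right integrable_integral i2 i3)
  finally show ?thesis .
qed

lemma z_summable:
  assumes nu: "\<nu> > 1/2"
  shows "summable (\<lambda>n. (real n powr (-\<nu>))^2)"
proof -
  have e: "(real n powr (-\<nu>))^2 = real n powr (-2 * \<nu>)" for n
    by (simp add: power2_eq_square powr_add[symmetric])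
  have "summable (\<lambda>n. real n powr (-2 * \<nu>))" using nu by (subst summable_real_powr_iff) simp
  thus ?thesis by (simp add: e)
qed

lemma aux_div5: "(P::real) > 0 \<Longrightarrow> Q > 0 \<Longrightarrow> P * (B * (e / (4 * P * Q))) = e * B / (4 * Q)"
  by simp

lemma aux_div4: "(K::real) > 0 \<Longrightarrow> e / (4 * K) * K = e / 4"
  by simp

theorem theorem5p9:
  fixes \<omega> \<zeta> c d :: "nat \<Rightarrow> complex" and r :: "nat \<Rightarrow> real"
    and \<gamma> \<alpha> chi \<mu> \<nu> M c1 c2 :: real and n' :: nat
  assumes gpos: "\<gamma> > 0" and apos: "\<alpha> > 0" and chineg: "chi < 0"
    and mupos: "\<mu> > 0" and nu: "\<nu> > 1/2" and Mpos: "M > 0"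
    and c1pos: "0 < c1" and c12: "c1 \<le> c2"
    and H1a: "Liminf sequentially (\<lambda>n. ereal (Re (\<omega> (Suc n)) - Re (\<omega> n))) = ereal \<gamma>"
    and H1b: "Liminf sequentially (\<lambda>n. ereal (Re (\<zeta> (Suc n)) - Re (\<zeta> n))) = ereal \<gamma>"
    and H2a: "(\<lambda>n. Im (\<omega> n)) \<longlonglongrightarrow> \<alpha>"
    and H2b: "r \<longlonglongrightarrow> chi"
    and H2c: "(\<lambda>n. Im (\<zeta> n)) \<longlonglongrightarrow> 0"
    and H3: "\<And>n. n \<ge> 1 \<Longrightarrow> \<omega> n \<noteq> 0 \<and> \<zeta> n \<noteq> 0
               \<and> c1 * cmod (\<zeta> n) \<le> cmod (d n) \<and> cmod (d n) \<le> c2 * cmod (\<zeta> n)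
               \<and> cmod (c n) \<le> M / cmod (\<omega> n)"
    and gamma_big: "\<gamma> > 4 * \<alpha>"
  shows "\<forall>\<epsilon>. 0 < \<epsilon> \<and> \<epsilon> < (\<gamma>\<^sup>2 - 16 * \<alpha>\<^sup>2) / (\<gamma>\<^sup>2 + 16 * \<alpha>\<^sup>2) \<longrightarrow>
     (\<exists>n0::nat. n0 \<ge> 1 \<and>
       (\<forall>T. T > 2 * pi / sqrt (\<gamma>\<^sup>2 * (1 - \<epsilon>) - 16 * \<alpha>\<^sup>2 * (1 + \<epsilon>)) \<longrightarrow>
         (\<exists>cT > 0. \<forall>(C::nat \<Rightarrow> complex) (D::nat \<Rightarrow> complex) (R::nat \<Rightarrow> real).
            (\<forall>n\<ge>max 1 n'. \<bar>R n\<bar> \<le> \<mu> * real n powr (-\<nu>) * sqrt ((cmod (C n))\<^sup>2 + (cmod (d n * D n))\<^sup>2)) \<longrightarrow>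
            (\<forall>n. 1 \<le> n \<and> n \<le> n' \<longrightarrow> \<bar>R n\<bar> \<le> \<mu> * sqrt ((cmod (C n))\<^sup>2 + (cmod (d n * D n))\<^sup>2)) \<longrightarrow>
            summable (\<lambda>n. (cmod (C (n + 1)))\<^sup>2 + (cmod (d (n + 1) * D (n + 1)))\<^sup>2) \<longrightarrow>
            (\<exists>L. (\<lambda>N. integral {0..} (\<lambda>t. kfun T t *
                    ((cmod (u1_part \<omega> \<zeta> r C D R n0 N t))\<^sup>2
                     + (cmod (u2_part \<omega> \<zeta> c d C D n0 N t))\<^sup>2))) \<longlonglongrightarrow> L
                 \<and> L \<ge> cT * (\<Sum>n. (1 + exp (- 2 * Im (\<omega> (n + n0)) * T))
                          * ((cmod (C (n + n0)))\<^sup>2 + (cmod (d (n + n0) * D (n + n0)))\<^sup>2))))))"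
proof (intro allI impI)
  fix \<epsilon> :: real
  assume eps: "0 < \<epsilon> \<and> \<epsilon> < (\<gamma>\<^sup>2 - 16 * \<alpha>\<^sup>2) / (\<gamma>\<^sup>2 + 16 * \<alpha>\<^sup>2)"
  have e0: "0 < \<epsilon>" using eps by simp
  have den: "\<gamma>\<^sup>2 + 16 * \<alpha>\<^sup>2 > 0" using gpos by (simp add: add_pos_nonneg)
  have "\<epsilon> * (\<gamma>\<^sup>2 + 16 * \<alpha>\<^sup>2) < \<gamma>\<^sup>2 - 16 * \<alpha>\<^sup>2" using eps den by (simp add: pos_less_divide_eq)
  hence Xpos: "\<gamma>\<^sup>2 * (1 - \<epsilon>) - 16 * \<alpha>\<^sup>2 * (1 + \<epsilon>) > 0" by (simp add: algebra_simps)
  define X where "X = \<gamma>\<^sup>2 * (1 - \<epsilon>) - 16 * \<alpha>\<^sup>2 * (1 + \<epsilon>)"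
  have X0: "X > 0" using Xpos by (simp add: X_def)
  have ga2: "\<gamma>\<^sup>2 > 0" "\<alpha>\<^sup>2 > 0" using gpos apos by auto
  have a16: "16 * \<alpha>\<^sup>2 * (1 + \<epsilon>) \<ge> 8 * \<alpha>\<^sup>2 * \<epsilon>" using e0 ga2 by (simp add: algebra_simps)
  have eps1: "\<epsilon> < 1"
  proof (rule ccontr)
    assume "\<not> \<epsilon> < 1"
    hence "\<gamma>\<^sup>2 * (1 - \<epsilon>) \<le> 0" using ga2 by (simp add: mult_nonneg_nonpos)
    moreover have "16 * \<alpha>\<^sup>2 * (1 + \<epsilon>) \<ge> 0" using e0 by simp
    ultimately show False using Xpos by linarith
  qed
  define g where "g = sqrt (\<gamma>\<^sup>2 * (1 - \<epsilon>/2))"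
  define Y where "Y = sqrt (\<alpha>\<^sup>2 * (1 + \<epsilon>/2))"
  have g2: "g\<^sup>2 = \<gamma>\<^sup>2 * (1 - \<epsilon>/2)" unfolding g_def using eps1 ga2 by (intro real_sqrt_pow2) simp
  have Y2: "Y\<^sup>2 = \<alpha>\<^sup>2 * (1 + \<epsilon>/2)" unfolding Y_def using e0 ga2 by (intro real_sqrt_pow2) simp
  have gp: "g > 0" unfolding g_def using eps1 ga2 by simp
  have Yp: "Y > 0" unfolding Y_def using e0 ga2 by simp
  have glt: "g < \<gamma>"
  proof -
    have "0 < \<epsilon> * \<gamma>\<^sup>2" using e0 ga2 by simp
    hence "g\<^sup>2 < \<gamma>\<^sup>2" using g2 by (simp add: algebra_simps)
    thus ?thesis using power2_less_imp_less[of g \<gamma>] gpos by simp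
  qed
  have Ygt: "\<alpha> < Y"
  proof -
    have "0 < \<epsilon> * \<alpha>\<^sup>2" using e0 ga2 by simp
    hence "\<alpha>\<^sup>2 < Y\<^sup>2" using Y2 by (simp add: algebra_simps)
    thus ?thesis using power2_less_imp_less[of \<alpha> Y] Yp by simp
  qed
  define \<eta> where "\<eta> = 1 - (\<gamma>\<^sup>2 * (1 - \<epsilon>) - 8 * \<alpha>\<^sup>2 * \<epsilon>) / g\<^sup>2"
  have g2p: "g\<^sup>2 > 0" using gp by simp
  have eta_eq: "(1 - \<eta>) * g\<^sup>2 = \<gamma>\<^sup>2 * (1 - \<epsilon>) - 8 * \<alpha>\<^sup>2 * \<epsilon>" unfolding \<eta>_def using g2p by simp
  have eta0: "0 < \<eta>"
  proof -
    have p1: "0 < \<epsilon> * \<gamma>\<^sup>2" "0 < \<epsilon> * \<alpha>\<^sup>2" using e0 ga2 by simp_all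
    have "\<gamma>\<^sup>2 * (1 - \<epsilon>) - 8 * \<alpha>\<^sup>2 * \<epsilon> = g\<^sup>2 - \<epsilon> * \<gamma>\<^sup>2 / 2 - 8 * (\<epsilon> * \<alpha>\<^sup>2)" using g2 by (simp add: algebra_simps)
    hence "\<gamma>\<^sup>2 * (1 - \<epsilon>) - 8 * \<alpha>\<^sup>2 * \<epsilon> < g\<^sup>2" using p1 by linarith
    thus ?thesis unfolding \<eta>_def using g2p by (simp add: divide_less_eq)
  qed
  have eta1: "\<eta> \<le> 1"
  proof -
    have "0 \<le> \<gamma>\<^sup>2 * (1 - \<epsilon>) - 8 * \<alpha>\<^sup>2 * \<epsilon>" using Xpos a16 by linarith
    thus ?thesis unfolding \<eta>_def using g2p by simp
  qed
  define s0 where "s0 = - chi / 2"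
  have s0p: "s0 > 0" using chineg by (simp add: s0_def)
  define Gc where "Gc = 2 * (1 + Y\<^sup>2 / s0\<^sup>2)"
  have Gcp: "Gc > 0" unfolding Gc_def by (simp add: add_pos_nonneg)
  define z where "z n = real n powr (-\<nu>)" for n :: nat
  have z0: "z n \<ge> 0" for n by (simp add: z_def)
  have evw: "eventually (\<lambda>n. g < Re (\<omega> (Suc n)) - Re (\<omega> n)) sequentially"
  proof -
    have "ereal \<gamma> \<le> Liminf sequentially (\<lambda>n. ereal (Re (\<omega> (Suc n)) - Re (\<omega> n)))" using H1a by simp
    hence "\<forall>y<ereal \<gamma>. eventually (\<lambda>n. y < ereal (Re (\<omega> (Suc n)) - Re (\<omega> n))) sequentially"
      by (simp only: le_Liminf_iff)
    moreover have "ereal g < ereal \<gamma>" using glt by simp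
    ultimately have "eventually (\<lambda>n. ereal g < ereal (Re (\<omega> (Suc n)) - Re (\<omega> n))) sequentially" by blast
    thus ?thesis by simp
  qed
  have evz: "eventually (\<lambda>n. g < Re (\<zeta> (Suc n)) - Re (\<zeta> n)) sequentially"
  proof -
    have "ereal \<gamma> \<le> Liminf sequentially (\<lambda>n. ereal (Re (\<zeta> (Suc n)) - Re (\<zeta> n)))" using H1b by simp
    hence "\<forall>y<ereal \<gamma>. eventually (\<lambda>n. y < ereal (Re (\<zeta> (Suc n)) - Re (\<zeta> n))) sequentially"
      by (simp only: le_Liminf_iff)
    moreover have "ereal g < ereal \<gamma>" using glt by simp
    ultimately have "eventually (\<lambda>n. ereal g < ereal (Re (\<zeta> (Suc n)) - Re (\<zeta> n))) sequentially" by blast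
    thus ?thesis by simp
  qed
  obtain Nw where Nw: "\<And>n. n \<ge> Nw \<Longrightarrow> g < Re (\<omega> (Suc n)) - Re (\<omega> n)" using evw unfolding eventually_sequentially by blast
  obtain Nz where Nz: "\<And>n. n \<ge> Nz \<Longrightarrow> g < Re (\<zeta> (Suc n)) - Re (\<zeta> n)" using evz unfolding eventually_sequentially by blast
  have stepNw: "\<And>n. n \<ge> Nw \<Longrightarrow> Re (\<omega> (Suc n)) - Re (\<omega> n) \<ge> g" using Nw less_imp_le by blast
  have stepNz: "\<And>n. n \<ge> Nz \<Longrightarrow> Re (\<zeta> (Suc n)) - Re (\<zeta> n) \<ge> g" using Nz less_imp_le by blast
  have bigw: "eventually (\<lambda>n. Re (\<omega> n) \<ge> B) sequentially" for B
    by (rule eventually_big[where f="\<lambda>n. Re (\<omega> n)", OF stepNw gp])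
  have bigz: "eventually (\<lambda>n. Re (\<zeta> n) \<ge> B) sequentially" for B
    by (rule eventually_big[where f="\<lambda>n. Re (\<zeta> n)", OF stepNz gp])
  define Bw where "Bw = max (g / 2) (4 * M / sqrt \<eta>)"
  define Bz where "Bz = max (g / 2) (sqrt (32 / \<eta>) / c1)"
  have ev_imw1: "eventually (\<lambda>n. Im (\<omega> n) < Y) sequentially" using H2a Ygt by (rule order_tendstoD)
  have ev_imw2: "eventually (\<lambda>n. Im (\<omega> n) > 0) sequentially" using H2a apos by (rule order_tendstoD)
  have ev_imz1: "eventually (\<lambda>n. Im (\<zeta> n) < Y) sequentially" using H2c Yp by (rule order_tendstoD)
  have ev_imz2: "eventually (\<lambda>n. Im (\<zeta> n) > - Y) sequentially" using H2c Yp by (intro order_tendstoD) auto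
  have ev_r: "eventually (\<lambda>n. r n < chi / 2) sequentially" using H2b chineg by (intro order_tendstoD) auto
  have ev_all: "eventually (\<lambda>n. n \<ge> Nw \<and> n \<ge> Nz \<and> Re (\<omega> n) \<ge> Bw \<and> Re (\<zeta> n) \<ge> Bz \<and> Im (\<omega> n) < Y \<and> Im (\<omega> n) > 0
      \<and> Im (\<zeta> n) < Y \<and> Im (\<zeta> n) > - Y \<and> r n < chi / 2) sequentially"
    by (intro eventually_conj bigw bigz ev_imw1 ev_imw2 ev_imz1 ev_imz2 ev_r eventually_ge_at_top)
  obtain N2 where N2: "\<And>n. n \<ge> N2 \<Longrightarrow> n \<ge> Nw \<and> n \<ge> Nz \<and> Re (\<omega> n) \<ge> Bw \<and> Re (\<zeta> n) \<ge> Bz \<and> Im (\<omega> n) < Y \<and> Im (\<omega> n) > 0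
      \<and> Im (\<zeta> n) < Y \<and> Im (\<zeta> n) > - Y \<and> r n < chi / 2"
    using ev_all unfolding eventually_sequentially by blast
  have zsum: "summable (\<lambda>n. (z n)\<^sup>2)" unfolding z_def by (rule z_summable[OF nu])
  define ez where "ez = \<eta> / (8 * \<mu>\<^sup>2 * Gc)"
  have ezp: "ez > 0" unfolding ez_def using eta0 mupos Gcp by simp
  obtain N0 where N0: "\<And>m n. m \<ge> N0 \<Longrightarrow> norm (sum (\<lambda>n. (z n)\<^sup>2) {m..<n}) < ez"
    using zsum ezp unfolding summable_Cauchy by blast
  define n0 where "n0 = max (max N2 N0) (Suc n')"
  have n0: "n0 \<ge> N2" "n0 \<ge> N0" "n0 \<ge> Suc n'" "n0 \<ge> 1" by (auto simp: n0_def)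
  show "\<exists>n0::nat. n0 \<ge> 1 \<and>
       (\<forall>T. T > 2 * pi / sqrt (\<gamma>\<^sup>2 * (1 - \<epsilon>) - 16 * \<alpha>\<^sup>2 * (1 + \<epsilon>)) \<longrightarrow>
         (\<exists>cT > 0. \<forall>(C::nat \<Rightarrow> complex) (D::nat \<Rightarrow> complex) (R::nat \<Rightarrow> real).
            (\<forall>n\<ge>max 1 n'. \<bar>R n\<bar> \<le> \<mu> * real n powr (-\<nu>) * sqrt ((cmod (C n))\<^sup>2 + (cmod (d n * D n))\<^sup>2)) \<longrightarrow>
            (\<forall>n. 1 \<le> n \<and> n \<le> n' \<longrightarrow> \<bar>R n\<bar> \<le> \<mu> * sqrt ((cmod (C n))\<^sup>2 + (cmod (d n * D n))\<^sup>2)) \<longrightarrow>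
            summable (\<lambda>n. (cmod (C (n + 1)))\<^sup>2 + (cmod (d (n + 1) * D (n + 1)))\<^sup>2) \<longrightarrow>
            (\<exists>L. (\<lambda>N. integral {0..} (\<lambda>t. kfun T t *
                    ((cmod (u1_part \<omega> \<zeta> r C D R n0 N t))\<^sup>2
                     + (cmod (u2_part \<omega> \<zeta> c d C D n0 N t))\<^sup>2))) \<longlonglongrightarrow> L
                 \<and> L \<ge> cT * (\<Sum>n. (1 + exp (- 2 * Im (\<omega> (n + n0)) * T))
                          * ((cmod (C (n + n0)))\<^sup>2 + (cmod (d (n + n0) * D (n + n0)))\<^sup>2)))))"
  proof (intro exI[of _ n0] conjI allI impI)
    show "n0 \<ge> 1" by (rule n0(4))
    fix T :: real
    assume Tbig: "T > 2 * pi / sqrt (\<gamma>\<^sup>2 * (1 - \<epsilon>) - 16 * \<alpha>\<^sup>2 * (1 + \<epsilon>))"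
    have sX: "sqrt X > 0" using X0 by simp
    have Tbig': "T > 2 * pi / sqrt X" using Tbig by (simp add: X_def)
    have "2 * pi / sqrt X > 0" using sX by simp
    hence Tp: "T > 0" using Tbig' by linarith
    have TX: "T * sqrt X > 2 * pi" using Tbig' sX by (simp add: divide_less_eq)
    have "(2 * pi)\<^sup>2 < (T * sqrt X)\<^sup>2" using TX by (intro power_strict_mono) auto
    hence "4 * pi\<^sup>2 < T\<^sup>2 * X" using X0 by (simp add: power_mult_distrib)
    hence piT: "4 * (pi / T)\<^sup>2 < X" using Tp by (simp add: power_divide divide_less_eq mult.commute)
    have A: "4 * ((pi/T)\<^sup>2 + 4 * Y\<^sup>2) \<le> (1 - \<eta>) * g\<^sup>2"
      unfolding eta_eq using piT Y2 unfolding X_def by (simp add: algebra_simps)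
    define b where "b = pi / T"
    define cT where "cT = \<eta> / 2 * ((pi/T) / (2 * ((pi/T)\<^sup>2 + 4 * Y\<^sup>2)))"
    have cTp: "cT > 0" unfolding cT_def using eta0 Tp by (intro mult_pos_pos divide_pos_pos) (auto intro: add_pos_nonneg)
    define B where "B = 30 * ((pi/T) * (1 + exp (2 * Y * T)) / (pi/T)\<^sup>2)"
    have Bp: "B > 0" unfolding B_def using Tp by (simp add: add_pos_nonneg)
    show "\<exists>cT > 0. \<forall>(C::nat \<Rightarrow> complex) (D::nat \<Rightarrow> complex) (R::nat \<Rightarrow> real).
            (\<forall>n\<ge>max 1 n'. \<bar>R n\<bar> \<le> \<mu> * real n powr (-\<nu>) * sqrt ((cmod (C n))\<^sup>2 + (cmod (d n * D n))\<^sup>2)) \<longrightarrow>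
            (\<forall>n. 1 \<le> n \<and> n \<le> n' \<longrightarrow> \<bar>R n\<bar> \<le> \<mu> * sqrt ((cmod (C n))\<^sup>2 + (cmod (d n * D n))\<^sup>2)) \<longrightarrow>
            summable (\<lambda>n. (cmod (C (n + 1)))\<^sup>2 + (cmod (d (n + 1) * D (n + 1)))\<^sup>2) \<longrightarrow>
            (\<exists>L. (\<lambda>N. integral {0..} (\<lambda>t. kfun T t *
                    ((cmod (u1_part \<omega> \<zeta> r C D R n0 N t))\<^sup>2
                     + (cmod (u2_part \<omega> \<zeta> c d C D n0 N t))\<^sup>2))) \<longlonglongrightarrow> L
                 \<and> L \<ge> cT * (\<Sum>n. (1 + exp (- 2 * Im (\<omega> (n + n0)) * T))
                          * ((cmod (C (n + n0)))\<^sup>2 + (cmod (d (n + n0) * D (n + n0)))\<^sup>2)))"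
    proof (rule exI[of _ cT], intro conjI allI impI cTp)
      fix C D :: "nat \<Rightarrow> complex" and R :: "nat \<Rightarrow> real"
      assume HR1: "\<forall>n\<ge>max 1 n'. \<bar>R n\<bar> \<le> \<mu> * real n powr (-\<nu>) * sqrt ((cmod (C n))\<^sup>2 + (cmod (d n * D n))\<^sup>2)"
        and HR2: "\<forall>n. 1 \<le> n \<and> n \<le> n' \<longrightarrow> \<bar>R n\<bar> \<le> \<mu> * sqrt ((cmod (C n))\<^sup>2 + (cmod (d n * D n))\<^sup>2)"
        and Hs: "summable (\<lambda>n. (cmod (C (n + 1)))\<^sup>2 + (cmod (d (n + 1) * D (n + 1)))\<^sup>2)"
      define q where "q n = (cmod (C n))\<^sup>2 + (cmod (d n * D n))\<^sup>2" for n
      define w where "w n = (1 + exp (- 2 * Im (\<omega> n) * T)) * q n" for n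
      have q0: "q n \<ge> 0" for n by (simp add: q_def)
      have qs: "summable q"
      proof -
        have "summable (\<lambda>n. q (Suc n))" using Hs by (simp add: q_def)
        thus ?thesis by (simp only: summable_Suc_iff)
      qed
      define I where "I m N = integral {0..T} (\<lambda>t. sin (pi * t / T) * ((cmod (u1_part \<omega> \<zeta> r C D R m N t))\<^sup>2 + (cmod (u2_part \<omega> \<zeta> c d C D m N t))\<^sup>2))" for m N
      have blk: "(\<lambda>t. sin (pi * t / T) * ((cmod (u1_part \<omega> \<zeta> r C D R m N t))\<^sup>2 + (cmod (u2_part \<omega> \<zeta> c d C D m N t))\<^sup>2)) integrable_on {0..T}
          \<and> cT * (\<Sum>n\<in>{m..<N}. w n) \<le> I m N \<and> I m N \<le> B * (\<Sum>n\<in>{m..<N}. q n)" if m: "m \<ge> n0" for m N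
      proof -
        have Pn: "n \<ge> Nw \<and> n \<ge> Nz \<and> Re (\<omega> n) \<ge> Bw \<and> Re (\<zeta> n) \<ge> Bz \<and> Im (\<omega> n) < Y \<and> Im (\<omega> n) > 0
            \<and> Im (\<zeta> n) < Y \<and> Im (\<zeta> n) > - Y \<and> r n < chi / 2" if "n \<ge> m" for n
          using N2[of n] that m n0 by auto
        have H3n: "\<omega> n \<noteq> 0 \<and> \<zeta> n \<noteq> 0 \<and> c1 * cmod (\<zeta> n) \<le> cmod (d n) \<and> cmod (d n) \<le> c2 * cmod (\<zeta> n)
               \<and> cmod (c n) \<le> M / cmod (\<omega> n)" if "n \<ge> m" for n
          using H3[of n] that m n0 by auto
        note bl = block[where \<omega>=\<omega> and \<zeta>=\<zeta> and c=c and d=d and C=C and D=D and r=r and R=R and z=z and m=m and N=N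
            and T=T and g=g and \<eta>=\<eta> and Y=Y and \<mu>=\<mu>]
        have stepw: "\<And>n. n \<ge> m \<Longrightarrow> Re (\<omega> (Suc n)) - Re (\<omega> n) \<ge> g" using Pn Nw by (meson less_imp_le)
        have stepz: "\<And>n. n \<ge> m \<Longrightarrow> Re (\<zeta> (Suc n)) - Re (\<zeta> n) \<ge> g" using Pn Nz by (meson less_imp_le)
        have startw: "Re (\<omega> m) \<ge> g / 2" using Pn[of m] by (simp add: Bw_def)
        have startz: "Re (\<zeta> m) \<ge> g / 2" using Pn[of m] by (simp add: Bz_def)
        have Yw: "\<And>n. n \<ge> m \<Longrightarrow> \<bar>Im (\<omega> n)\<bar> \<le> Y" using Pn by fastforce
        have Imw: "\<And>n. n \<ge> m \<Longrightarrow> Im (\<omega> n) \<ge> 0" using Pn by fastforce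
        have Yz: "\<And>n. n \<ge> m \<Longrightarrow> \<bar>Im (\<zeta> n)\<bar> \<le> Y" using Pn by fastforce
        have rb: "\<And>n. n \<ge> m \<Longrightarrow> r n \<le> - s0" using Pn by (fastforce simp: s0_def)
        have cb: "(cmod (c n))\<^sup>2 \<le> \<eta> / 16" if n: "n \<ge> m" for n
        proof -
          have big: "cmod (\<omega> n) \<ge> 4 * M / sqrt \<eta>"
            using Pn[OF n] complex_Re_le_cmod[of "\<omega> n"] by (simp add: Bw_def)
          have sq: "sqrt \<eta> > 0" using eta0 by simp
          have "4 * M / sqrt \<eta> > 0" using Mpos sq by simp
          hence wpos: "cmod (\<omega> n) > 0" using big by linarith
          have "cmod (c n) \<le> M / cmod (\<omega> n)" using H3n[OF n] by simp
          also have "\<dots> \<le> M / (4 * M / sqrt \<eta>)" using big Mpos sq wpos by (intro divide_left_mono) (auto intro!: mult_pos_pos divide_pos_pos)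
          also have "\<dots> = sqrt \<eta> / 4" using Mpos sq by simp
          finally have "cmod (c n) \<le> sqrt \<eta> / 4" .
          hence "(cmod (c n))\<^sup>2 \<le> (sqrt \<eta> / 4)\<^sup>2" by (intro power_mono) auto
          thus ?thesis using eta0 by (simp add: power_divide)
        qed
        have db: "(cmod (D n))\<^sup>2 \<le> \<eta> / 32 * (cmod (d n * D n))\<^sup>2" if n: "n \<ge> m" for n
        proof -
          have big: "cmod (\<zeta> n) \<ge> sqrt (32 / \<eta>) / c1"
            using Pn[OF n] complex_Re_le_cmod[of "\<zeta> n"] by (simp add: Bz_def)
          hence "c1 * cmod (\<zeta> n) \<ge> sqrt (32 / \<eta>)" using c1pos by (simp add: divide_le_eq mult.commute)
          hence "cmod (d n) \<ge> sqrt (32 / \<eta>)" using H3n[OF n] by linarith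
          hence "cmod (d n) * cmod (D n) \<ge> sqrt (32 / \<eta>) * cmod (D n)" by (intro mult_right_mono) auto
          hence "(cmod (d n * D n))\<^sup>2 \<ge> (sqrt (32 / \<eta>) * cmod (D n))\<^sup>2"
          proof -
            assume h: "cmod (d n) * cmod (D n) \<ge> sqrt (32 / \<eta>) * cmod (D n)"
            have "(sqrt (32 / \<eta>) * cmod (D n))\<^sup>2 \<le> (cmod (d n) * cmod (D n))\<^sup>2"
              using h eta0 by (intro power_mono) auto
            thus ?thesis by (simp add: norm_mult)
          qed
          also have "(sqrt (32 / \<eta>) * cmod (D n))\<^sup>2 = 32 / \<eta> * (cmod (D n))\<^sup>2"
            using eta0 by (simp add: power_mult_distrib)
          finally have "32 / \<eta> * (cmod (D n))\<^sup>2 \<le> (cmod (d n * D n))\<^sup>2" .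
          hence "\<eta> / 32 * (32 / \<eta> * (cmod (D n))\<^sup>2) \<le> \<eta> / 32 * (cmod (d n * D n))\<^sup>2"
            using eta0 by (intro mult_left_mono) auto
          thus ?thesis using eta0 by simp
        qed
        have Rb: "\<bar>R n\<bar> \<le> \<mu> * z n * sqrt ((cmod (C n))\<^sup>2 + (cmod (d n * D n))\<^sup>2)" if n: "n \<ge> m" for n
          using HR1 n m n0 by (auto simp: z_def)
        have Zb: "\<mu>\<^sup>2 * (\<Sum>n\<in>{m..<N}. (z n)\<^sup>2) * (2 * (1 + Y\<^sup>2 / s0\<^sup>2)) \<le> \<eta> / 8"
        proof -
          have "(\<Sum>n\<in>{m..<N}. (z n)\<^sup>2) < ez" using N0[of m N] m n0 by (simp add: sum_nonneg)
          hence "\<mu>\<^sup>2 * (\<Sum>n\<in>{m..<N}. (z n)\<^sup>2) * Gc \<le> \<mu>\<^sup>2 * ez * Gc"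
            using mupos Gcp by (intro mult_right_mono mult_left_mono) auto
          also have "\<dots> = \<eta> / 8" unfolding ez_def using mupos Gcp by simp
          finally show ?thesis by (simp add: Gc_def)
        qed
        have b1: "(\<lambda>t. sin (pi * t / T) * ((cmod (u1_part \<omega> \<zeta> r C D R m N t))\<^sup>2 + (cmod (u2_part \<omega> \<zeta> c d C D m N t))\<^sup>2)) integrable_on {0..T}"
          by (rule bl(1)[OF Tp gp eta0 eta1 less_imp_le[OF Yp] A s0p stepw startw stepz startz Yw Imw Yz rb cb db Rb
                less_imp_le[OF mupos] z0 Zb])
        have b2: "\<eta> / 2 * ((pi/T) / (2 * ((pi/T)\<^sup>2 + 4 * Y\<^sup>2))) * (\<Sum>n\<in>{m..<N}. (1 + exp (-2 * Im (\<omega> n) * T)) * ((cmod (C n))\<^sup>2 + (cmod (d n * D n))\<^sup>2))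
           \<le> I m N"
          unfolding I_def
          by (rule bl(2)[OF Tp gp eta0 eta1 less_imp_le[OF Yp] A s0p stepw startw stepz startz Yw Imw Yz rb cb db Rb
                less_imp_le[OF mupos] z0 Zb])
        have b3: "I m N \<le> 30 * ((pi/T) * (1 + exp (2 * Y * T)) / (pi/T)\<^sup>2) * (\<Sum>n\<in>{m..<N}. (cmod (C n))\<^sup>2 + (cmod (d n * D n))\<^sup>2)"
          unfolding I_def
          by (rule bl(3)[OF Tp gp eta0 eta1 less_imp_le[OF Yp] A s0p stepw startw stepz startz Yw Imw Yz rb cb db Rb
                less_imp_le[OF mupos] z0 Zb])
        show ?thesis using b1 b2 b3 unfolding cT_def B_def w_def q_def by simp
      qed
      have Ieq: "integral {0..} (\<lambda>t. kfun T t * ((cmod (u1_part \<omega> \<zeta> r C D R n0 N t))\<^sup>2 + (cmod (u2_part \<omega> \<zeta> c d C D n0 N t))\<^sup>2)) = I n0 N" for N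
      proof -
        have "((\<lambda>t. sin (pi * t / T) * ((cmod (u1_part \<omega> \<zeta> r C D R n0 N t))\<^sup>2 + (cmod (u2_part \<omega> \<zeta> c d C D n0 N t))\<^sup>2)) has_integral I n0 N) {0..T}"
          using blk[OF order_refl, of N] unfolding I_def by (simp add: integrable_integral)
        from kfun_integral[OF Tp this] show ?thesis by (rule integral_unique)
      qed
      have w0: "w n \<ge> 0" for n by (simp add: w_def q0 add_nonneg_nonneg)
      have Inn: "I m N \<ge> 0" if "m \<ge> n0" for m N
      proof -
        have "0 \<le> cT * (\<Sum>n\<in>{m..<N}. w n)" using cTp w0 by (intro mult_nonneg_nonneg sum_nonneg) (auto simp: less_imp_le)
        thus ?thesis using blk[OF that, of N] by linarith
      qed
      define Qall where "Qall = suminf q"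
      have Qall0: "Qall \<ge> 0" unfolding Qall_def by (rule suminf_nonneg[OF qs q0])
      have Iub: "I n0 N \<le> B * Qall" for N
      proof -
        have "(\<Sum>n\<in>{n0..<N}. q n) \<le> Qall" unfolding Qall_def by (rule sum_le_suminf[OF qs]) (auto simp: q0)
        hence "B * (\<Sum>n\<in>{n0..<N}. q n) \<le> B * Qall" using Bp by (intro mult_left_mono) auto
        thus ?thesis using blk[OF order_refl, of N] by linarith
      qed
      have Isplit: "I n0 n \<le> (1 + \<delta>) * I n0 m + (1 + 1 / \<delta>) * I m n \<and> I n0 m \<le> (1 + \<delta>) * I n0 n + (1 + 1 / \<delta>) * I m n"
        if mn: "n0 \<le> m" "m \<le> n" and d: "\<delta> > 0" for m n \<delta>
      proof
        have e1: "I n0 n = integral {0..T} (\<lambda>t. sin (pi * t / T) * ((cmod (u1_part \<omega> \<zeta> r C D R n0 m t + u1_part \<omega> \<zeta> r C D R m n t))\<^sup>2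
            + (cmod (u2_part \<omega> \<zeta> c d C D n0 m t + u2_part \<omega> \<zeta> c d C D m n t))\<^sup>2))"
          unfolding I_def using u1_split[OF mn] u2_split[OF mn] by simp
        have h1: "integral {0..T} (\<lambda>t. sin (pi * t / T) * ((cmod (u1_part \<omega> \<zeta> r C D R n0 m t + u1_part \<omega> \<zeta> r C D R m n t))\<^sup>2
            + (cmod (u2_part \<omega> \<zeta> c d C D n0 m t + u2_part \<omega> \<zeta> c d C D m n t))\<^sup>2)) \<le> (1 + \<delta>) * I n0 m + (1 + 1 / \<delta>) * I m n"
          unfolding I_def by (rule int_delta[OF Tp d cont_u1 cont_u2 cont_u1 cont_u2])
        show "I n0 n \<le> (1 + \<delta>) * I n0 m + (1 + 1 / \<delta>) * I m n"
          by (subst e1) (rule h1)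
        have e2: "I n0 m = integral {0..T} (\<lambda>t. sin (pi * t / T) * ((cmod (u1_part \<omega> \<zeta> r C D R n0 n t + (- u1_part \<omega> \<zeta> r C D R m n t)))\<^sup>2
            + (cmod (u2_part \<omega> \<zeta> c d C D n0 n t + (- u2_part \<omega> \<zeta> c d C D m n t)))\<^sup>2))"
          unfolding I_def using u1_split[OF mn] u2_split[OF mn] by simp
        have h2: "integral {0..T} (\<lambda>t. sin (pi * t / T) * ((cmod (u1_part \<omega> \<zeta> r C D R n0 n t + (- u1_part \<omega> \<zeta> r C D R m n t)))\<^sup>2
            + (cmod (u2_part \<omega> \<zeta> c d C D n0 n t + (- u2_part \<omega> \<zeta> c d C D m n t)))\<^sup>2))
            \<le> (1 + \<delta>) * I n0 n + (1 + 1 / \<delta>) * integral {0..T} (\<lambda>t. sin (pi * t / T) * ((cmod (- u1_part \<omega> \<zeta> r C D R m n t))\<^sup>2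
            + (cmod (- u2_part \<omega> \<zeta> c d C D m n t))\<^sup>2))"
          unfolding I_def
          by (rule int_delta[OF Tp d cont_u1 cont_u2 continuous_on_minus[OF cont_u1] continuous_on_minus[OF cont_u2]])
        have "I n0 m \<le> (1 + \<delta>) * I n0 n + (1 + 1 / \<delta>) * integral {0..T} (\<lambda>t. sin (pi * t / T) * ((cmod (- u1_part \<omega> \<zeta> r C D R m n t))\<^sup>2
            + (cmod (- u2_part \<omega> \<zeta> c d C D m n t))\<^sup>2))"
          by (subst e2) (rule h2)
        thus "I n0 m \<le> (1 + \<delta>) * I n0 n + (1 + 1 / \<delta>) * I m n" unfolding I_def by simp
      qed
      have conv: "convergent (\<lambda>N. I n0 N)"
      proof -
        have "Cauchy (\<lambda>N. I n0 N)"
        proof (rule CauchyI)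
          fix e :: real assume e: "e > 0"
          define \<delta> where "\<delta> = e / (4 * (B * Qall + 1))"
          have BQ: "B * Qall \<ge> 0" using Bp Qall0 by simp
          have dp: "\<delta> > 0" unfolding \<delta>_def using e BQ by (simp add: add_nonneg_pos)
          define e2 where "e2 = e / (4 * (1 + 1 / \<delta>) * (B + 1))"
          have e2p: "e2 > 0" unfolding e2_def using e dp Bp by (simp add: add_pos_pos)
          obtain N0' where N0': "\<And>m n. m \<ge> N0' \<Longrightarrow> norm (sum q {m..<n}) < e2"
            using qs e2p unfolding summable_Cauchy by blast
          have dB: "\<delta> * I n0 k \<le> e / 4" for k
          proof -
            have "\<delta> * I n0 k \<le> \<delta> * (B * Qall + 1)" using Iub[of k] dp by (intro mult_left_mono) auto
            also have "\<dots> = e / 4"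
            proof -
              have "B * Qall + 1 > 0" using BQ by simp
              thus ?thesis unfolding \<delta>_def by (rule aux_div4)
            qed
            finally show ?thesis .
          qed
          have key: "\<bar>I n0 j - I n0 i\<bar> < e" if ij: "max N0' n0 \<le> i" "i \<le> j" for i j
          proof -
            have i0: "n0 \<le> i" using ij by simp
            have "sum q {i..<j} < e2" using N0'[of i j] ij q0 by (simp add: sum_nonneg)
            hence "B * sum q {i..<j} \<le> B * e2" using Bp by (intro mult_left_mono) auto
            hence tail: "I i j \<le> B * e2" using blk[OF i0, of j] by linarith
            have "(1 + 1 / \<delta>) * I i j \<le> (1 + 1 / \<delta>) * (B * e2)" using tail dp by (intro mult_left_mono) auto
            also have "\<dots> = e * B / (4 * (B + 1))" unfolding e2_def
              by (rule aux_div5) (use dp Bp in \<open>auto intro: add_pos_pos\<close>)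
            also have "\<dots> \<le> e / 4" using e Bp by (simp add: field_simps)
            finally have t2: "(1 + 1 / \<delta>) * I i j \<le> e / 4" .
            have s1: "I n0 j \<le> (1 + \<delta>) * I n0 i + (1 + 1 / \<delta>) * I i j" using Isplit[OF i0 ij(2) dp] by blast
            have s2: "I n0 i \<le> (1 + \<delta>) * I n0 j + (1 + 1 / \<delta>) * I i j" using Isplit[OF i0 ij(2) dp] by blast
            have "(1 + \<delta>) * I n0 i = I n0 i + \<delta> * I n0 i" "(1 + \<delta>) * I n0 j = I n0 j + \<delta> * I n0 j" by (simp_all add: algebra_simps)
            thus ?thesis using s1 s2 t2 dB[of i] dB[of j] e unfolding abs_less_iff by (intro conjI) linarith+
          qed
          show "\<exists>M. \<forall>m\<ge>M. \<forall>n\<ge>M. norm (I n0 m - I n0 n) < e"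
          proof (intro exI[of _ "max N0' n0"] allI impI)
            fix m n assume m: "max N0' n0 \<le> m" and n: "max N0' n0 \<le> n"
            show "norm (I n0 m - I n0 n) < e"
            proof (cases "m \<le> n")
              case True
              then show ?thesis using key[OF m True] by (simp add: abs_minus_commute)
            next
              case False
              then show ?thesis using key[OF n, of m] by simp
            qed
          qed
        qed
        thus ?thesis by (simp add: Cauchy_convergent_iff)
      qed
      then obtain L where L: "(\<lambda>N. I n0 N) \<longlonglongrightarrow> L" by (auto simp: convergent_def)
      show "\<exists>L. (\<lambda>N. integral {0..} (\<lambda>t. kfun T t *
                    ((cmod (u1_part \<omega> \<zeta> r C D R n0 N t))\<^sup>2
                     + (cmod (u2_part \<omega> \<zeta> c d C D n0 N t))\<^sup>2))) \<longlonglongrightarrow> L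
                 \<and> L \<ge> cT * (\<Sum>n. (1 + exp (- 2 * Im (\<omega> (n + n0)) * T))
                          * ((cmod (C (n + n0)))\<^sup>2 + (cmod (d (n + n0) * D (n + n0)))\<^sup>2))"
      proof (intro exI[of _ L] conjI)
        show "(\<lambda>N. integral {0..} (\<lambda>t. kfun T t *
                    ((cmod (u1_part \<omega> \<zeta> r C D R n0 N t))\<^sup>2
                     + (cmod (u2_part \<omega> \<zeta> c d C D n0 N t))\<^sup>2))) \<longlonglongrightarrow> L"
          unfolding Ieq by (rule L)
        have wle: "norm (w (n + n0)) \<le> 2 * q (n + n0)" for n
        proof -
          have "Im (\<omega> (n + n0)) > 0" using N2[of "n + n0"] n0(1) by simp
          hence ex: "exp (- 2 * Im (\<omega> (n + n0)) * T) \<le> 1" using Tp by simp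
          have "w (n + n0) = (1 + exp (- 2 * Im (\<omega> (n + n0)) * T)) * q (n + n0)" by (simp add: w_def)
          also have "\<dots> \<le> 2 * q (n + n0)" by (rule mult_right_mono) (use ex q0 in auto)
          finally have "w (n + n0) \<le> 2 * q (n + n0)" .
          moreover have "norm (w (n + n0)) = w (n + n0)" using w0[of "n + n0"] by simp
          ultimately show ?thesis by simp
        qed
        have qs2: "summable (\<lambda>n. 2 * q (n + n0))"
          by (rule summable_mult) (rule summable_ignore_initial_segment[OF qs])
        have ws: "summable (\<lambda>n. w (n + n0))"
          by (rule summable_comparison_test[OF _ qs2]) (use wle in blast)
        have lim1: "(\<lambda>k. cT * (\<Sum>j<k. w (j + n0))) \<longlonglongrightarrow> cT * (\<Sum>n. w (n + n0))"
          by (rule tendsto_mult_left) (rule summable_LIMSEQ[OF ws])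
        have lim2: "(\<lambda>k. I n0 (k + n0)) \<longlonglongrightarrow> L" by (rule LIMSEQ_ignore_initial_segment[OF L])
        have le: "cT * (\<Sum>j<k. w (j + n0)) \<le> I n0 (k + n0)" for k
        proof -
          have sh: "sum w {0 + n0..<k + n0} = sum (\<lambda>i. w (i + n0)) {0..<k}" by (rule sum.shift_bounds_nat_ivl)
          have "cT * (\<Sum>n\<in>{n0..<k + n0}. w n) \<le> I n0 (k + n0)" using blk[OF order_refl, of "k + n0"] by blast
          thus ?thesis using sh by (simp add: atLeast0LessThan)
        qed
        have "cT * (\<Sum>n. w (n + n0)) \<le> L"
          by (rule LIMSEQ_le[OF lim1 lim2]) (use le in blast)
        thus "L \<ge> cT * (\<Sum>n. (1 + exp (- 2 * Im (\<omega> (n + n0)) * T))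
                          * ((cmod (C (n + n0)))\<^sup>2 + (cmod (d (n + n0) * D (n + n0)))\<^sup>2))"
          by (simp only: w_def q_def)
      qed
    qed
  qed
qed


end
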